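(* Under model $\mathcal M_{\mathrm s}$, the process $\{V_{1,t}\}_{t\ge0}$, where $V_{1,t}=\mathbb P(\tau_1<t\mid X_{1,1},\dots,X_{1,t})$, is a time-homogeneous Markov chain on $[0,1]$, and its transition kernel $K(\cdot,\cdot)$ is stochastically monotone: for $0\le x\le x'\le1$ (in the state space), $K(x,\cdot)\le_{st}K(x',\cdot)$.
   Context: There are $K\ge1$ data streams; stream $k$ has observations $X_{k,t}$, $t=1,2,\dots$, and change point $\tau_k$. Model $\mathcal M_{\mathrm s}$: $\tau_1,\dots,\tau_K$ are i.i.d. with $\mathbb P(\tau_k=m)=\theta(1-\theta)^m$, $m=0,1,2,\dots$, $\theta\in(0,1)$; conditionally on $(\tau_1,\dots,\tau_K)$, the $X_{k,t}$ are independent over $k,t$ with density $p$ if $t\le\tau_k$ and $q$ if $t>\tau_k$ (with respect to a baseline measure; $p,q$ positive on a common support). For real random variables (or distributions) $A\le_{st}B$ means $\mathbb P(A\ge x)\le\mathbb P(B\ge x)$ for all real $x$. *)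

theory Defs
  imports "HOL-Probability.Probability"
begin

definition stoch_le :: "real measure \<Rightarrow> real measure \<Rightarrow> bool" where
  "stoch_le A B \<longleftrightarrow> (\<forall>x::real. measure A {x..} \<le> measure B {x..})"

definition obs_sigma :: "'a measure \<Rightarrow> 'b measure \<Rightarrow> (nat \<Rightarrow> 'a \<Rightarrow> 'b) \<Rightarrow> nat \<Rightarrow> 'a measure" where
  "obs_sigma M N Y t = sigma (space M) {Y s -` A \<inter> space M | s A. s \<in> {1..t} \<and> A \<in> sets N}"

definition posterior :: "'a measure \<Rightarrow> 'b measure \<Rightarrow> ('a \<Rightarrow> nat) \<Rightarrow> (nat \<Rightarrow> 'a \<Rightarrow> 'b) \<Rightarrow> nat \<Rightarrow> 'a \<Rightarrow> real" where
  "posterior M N tau Y t = real_cond_exp M (obs_sigma M N Y t) (\<lambda>\<omega>. if tau \<omega> < t then 1 else 0)"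

definition proc_sigma :: "'a measure \<Rightarrow> (nat \<Rightarrow> 'a \<Rightarrow> real) \<Rightarrow> nat \<Rightarrow> 'a measure" where
  "proc_sigma M V t = sigma (space M) {V s -` B \<inter> space M | s B. s \<le> t \<and> B \<in> sets borel}"

end

theory Submission
  imports Defs
begin


locale chg =
  fixes M :: "'a measure" and N :: "'b measure"
    and K :: nat and \<theta> :: real and p q :: "'b \<Rightarrow> real"
    and tau :: "nat \<Rightarrow> 'a \<Rightarrow> nat" and X :: "nat \<Rightarrow> nat \<Rightarrow> 'a \<Rightarrow> 'b"
  assumes M: "prob_space M"
    and K: "K \<ge> 1"
    and th0: "0 < \<theta>" and th1: "\<theta> < 1"
    and pm[measurable]: "p \<in> borel_measurable N" and qm[measurable]: "q \<in> borel_measurable N"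
    and p0: "\<And>y. p y \<ge> 0" and q0: "\<And>y. q y \<ge> 0"
    and pint: "(\<integral>\<^sup>+ y. ennreal (p y) \<partial>N) = 1" and qint: "(\<integral>\<^sup>+ y. ennreal (q y) \<partial>N) = 1"
    and pq: "\<And>y. p y > 0 \<longleftrightarrow> q y > 0"
    and taum[measurable]: "\<And>k. tau k \<in> measurable M (count_space UNIV)"
    and Xm[measurable]: "\<And>k t. X k t \<in> measurable M N"
    and joint: "\<And>n (m :: nat \<Rightarrow> nat) (A :: nat \<Rightarrow> nat \<Rightarrow> 'b set).
           (\<And>k t. A k t \<in> sets N) \<Longrightarrow>
           emeasure M {\<omega> \<in> space M. (\<forall>k\<in>{1..K}. tau k \<omega> = m k) \<and>
                                     (\<forall>k\<in>{1..K}. \<forall>t\<in>{1..n}. X k t \<omega> \<in> A k t)}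
           = (\<Prod>k\<in>{1..K}. ennreal (\<theta> * (1 - \<theta>) ^ m k)) *
             (\<Prod>k\<in>{1..K}. \<Prod>t\<in>{1..n}.
                 \<integral>\<^sup>+ y \<in> A k t. ennreal (if t \<le> m k then p y else q y) \<partial>N)"
begin

sublocale prob_space M by (rule M)

definition dens :: "nat \<Rightarrow> nat \<Rightarrow> 'b \<Rightarrow> real" where
  "dens m s y = (if s \<le> m then p y else q y)"

lemma dens_nn: "dens m s y \<ge> 0" using p0 q0 by (simp add: dens_def)

lemma dens_m[measurable]: "dens m s \<in> borel_measurable N"
  unfolding dens_def by measurable

lemma dens_int: "(\<integral>\<^sup>+ y\<in>space N. ennreal (dens m s y) \<partial>N) = 1"
proof -
  have "(\<integral>\<^sup>+ y\<in>space N. ennreal (dens m s y) \<partial>N) = (\<integral>\<^sup>+ y. ennreal (dens m s y) \<partial>N)"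
    by (intro nn_integral_cong) auto
  also have "\<dots> = 1" using pint qint by (cases "s \<le> m") (simp_all add: dens_def)
  finally show ?thesis .
qed

lemma geom_sum: "(\<Sum>i. ennreal (\<theta> * (1 - \<theta>) ^ i)) = 1"
proof -
  have s: "summable (\<lambda>i. (1 - \<theta>) ^ i)" using th0 th1 by (intro summable_geometric) auto
  have "(\<Sum>i. ennreal (\<theta> * (1 - \<theta>) ^ i)) = ennreal (\<Sum>i. \<theta> * (1 - \<theta>) ^ i)"
    using th0 th1 s by (intro suminf_ennreal2) (auto intro: summable_mult)
  also have "(\<Sum>i. \<theta> * (1 - \<theta>) ^ i) = \<theta> * (\<Sum>i. (1 - \<theta>) ^ i)"
    using s by (rule suminf_mult)
  also have "(\<Sum>i. (1 - \<theta>) ^ i) = 1 / (1 - (1 - \<theta>))" using th0 th1 by (intro suminf_geometric) auto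
  finally show ?thesis using th0 by simp
qed

definition Ev :: "nat set \<Rightarrow> nat \<Rightarrow> (nat \<Rightarrow> nat) \<Rightarrow> (nat \<Rightarrow> nat \<Rightarrow> 'b set) \<Rightarrow> 'a set" where
  "Ev S n m A = {\<omega> \<in> space M. (\<forall>k\<in>S. tau k \<omega> = m k) \<and> (\<forall>k\<in>S. \<forall>t\<in>{1..n}. X k t \<omega> \<in> A k t)}"

lemma Ev_sets: assumes "finite S" and [measurable]: "\<And>k t. A k t \<in> sets N" shows "Ev S n m A \<in> sets M"
  unfolding Ev_def using assms(1) by measurable

lemma marg_aux:
  assumes "card ({1..K} - S) = d" "S \<subseteq> {1..K}" "\<And>k t. A k t \<in> sets N"
  shows "emeasure M (Ev S n m A) = (\<Prod>k\<in>S. ennreal (\<theta> * (1 - \<theta>) ^ m k)) *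
             (\<Prod>k\<in>S. \<Prod>t\<in>{1..n}. \<integral>\<^sup>+ y \<in> A k t. ennreal (dens (m k) t y) \<partial>N)"
  using assms
proof (induction d arbitrary: S m A)
  case 0
  then have "S = {1..K}" by auto
  then show ?case using joint[OF 0(3), of m n] by (simp add: Ev_def dens_def)
next
  case (Suc d)
  then obtain j where j: "j \<in> {1..K}" "j \<notin> S"
    by (metis Diff_iff card.empty ex_in_conv nat.distinct(1))
  define S' where "S' = insert j S"
  define A' where "A' = A(j := (\<lambda>_. space N))"
  have A': "\<And>k t. A' k t \<in> sets N" using Suc(4) by (simp add: A'_def)
  have cS': "card ({1..K} - S') = d"
    using Suc(2) j unfolding S'_def
    by (metis Diff_insert card_Diff_singleton diff_Suc_1 DiffI)
  have S'K: "S' \<subseteq> {1..K}" using Suc(3) j by (auto simp: S'_def)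
  have fS: "finite S" using Suc(3) finite_subset by blast
  have IH: "\<And>i. emeasure M (Ev S' n (m(j:=i)) A') =
      (\<Prod>k\<in>S'. ennreal (\<theta> * (1 - \<theta>) ^ (m(j:=i)) k)) *
             (\<Prod>k\<in>S'. \<Prod>t\<in>{1..n}. \<integral>\<^sup>+ y \<in> A' k t. ennreal (dens ((m(j:=i)) k) t y) \<partial>N)"
    using Suc.IH[OF cS' S'K A'] .
  define c where "c = (\<Prod>k\<in>S. ennreal (\<theta> * (1 - \<theta>) ^ m k)) *
             (\<Prod>k\<in>S. \<Prod>t\<in>{1..n}. \<integral>\<^sup>+ y \<in> A k t. ennreal (dens (m k) t y) \<partial>N)"
  have tm: "emeasure M (Ev S' n (m(j:=i)) A') = c * ennreal (\<theta> * (1 - \<theta>) ^ i)" for i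
  proof -
    have e1: "(\<Prod>k\<in>S'. ennreal (\<theta> * (1 - \<theta>) ^ (m(j:=i)) k)) =
        ennreal (\<theta> * (1 - \<theta>) ^ i) * (\<Prod>k\<in>S. ennreal (\<theta> * (1 - \<theta>) ^ m k))"
    proof -
      have "(\<Prod>k\<in>S. ennreal (\<theta> * (1 - \<theta>) ^ (m(j:=i)) k)) = (\<Prod>k\<in>S. ennreal (\<theta> * (1 - \<theta>) ^ m k))"
        using j by (intro prod.cong) auto
      then show ?thesis unfolding S'_def using j fS by (simp add: prod.insert)
    qed
    have e2: "(\<Prod>k\<in>S'. \<Prod>t\<in>{1..n}. \<integral>\<^sup>+ y \<in> A' k t. ennreal (dens ((m(j:=i)) k) t y) \<partial>N) =
       (\<Prod>t\<in>{1..n}. \<integral>\<^sup>+ y \<in> space N. ennreal (dens i t y) \<partial>N) *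
       (\<Prod>k\<in>S. \<Prod>t\<in>{1..n}. \<integral>\<^sup>+ y \<in> A k t. ennreal (dens (m k) t y) \<partial>N)"
    proof -
      have "(\<Prod>k\<in>S. \<Prod>t\<in>{1..n}. \<integral>\<^sup>+ y \<in> A' k t. ennreal (dens ((m(j:=i)) k) t y) \<partial>N) = 
          (\<Prod>k\<in>S. \<Prod>t\<in>{1..n}. \<integral>\<^sup>+ y \<in> A k t. ennreal (dens (m k) t y) \<partial>N)"
        using j by (intro prod.cong) (auto simp: A'_def)
      then show ?thesis unfolding S'_def using j fS by (simp add: prod.insert A'_def)
    qed
    show ?thesis unfolding IH e1 e2 dens_int c_def by (simp add: ac_simps)
  qed
  have un: "Ev S n m A = (\<Union>i. Ev S' n (m(j:=i)) A')"
  proof -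
    have "\<And>\<omega> t. \<omega> \<in> space M \<Longrightarrow> X j t \<omega> \<in> space N"
      using measurable_space[OF Xm] by blast
    then show ?thesis unfolding Ev_def S'_def A'_def using j by auto
  qed
  have disj: "disjoint_family (\<lambda>i. Ev S' n (m(j:=i)) A')"
    unfolding disjoint_family_on_def Ev_def S'_def by auto
  have "emeasure M (Ev S n m A) = (\<Sum>i. emeasure M (Ev S' n (m(j:=i)) A'))"
    unfolding un using disj S'K A'
    by (intro suminf_emeasure[symmetric]) (auto intro!: Ev_sets finite_subset[OF S'K])
  also have "\<dots> = (\<Sum>i. c * ennreal (\<theta> * (1 - \<theta>) ^ i))" by (simp add: tm)
  also have "\<dots> = c" by (simp add: geom_sum)
  finally show ?case unfolding c_def .
qed

definition T :: "'a \<Rightarrow> nat" where "T = tau 1"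
definition x :: "nat \<Rightarrow> 'a \<Rightarrow> 'b" where "x s = X 1 s"

lemma T_m[measurable]: "T \<in> measurable M (count_space UNIV)" unfolding T_def by simp
lemma x_m[measurable]: "x s \<in> measurable M N" unfolding x_def by simp

lemma fact1:
  assumes "\<And>s. A s \<in> sets N"
  shows "emeasure M {\<omega>\<in>space M. T \<omega> = m \<and> (\<forall>s\<in>{1..n}. x s \<omega> \<in> A s)} =
     ennreal (\<theta> * (1 - \<theta>) ^ m) * (\<Prod>s\<in>{1..n}. \<integral>\<^sup>+ y \<in> A s. ennreal (dens m s y) \<partial>N)"
proof -
  have "emeasure M (Ev {1} n (\<lambda>_. m) (\<lambda>_. A)) = (\<Prod>k\<in>{1}. ennreal (\<theta> * (1 - \<theta>) ^ m)) *
             (\<Prod>k\<in>{1}. \<Prod>t\<in>{1..n}. \<integral>\<^sup>+ y \<in> A t. ennreal (dens m t y) \<partial>N)"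
    using marg_aux[of "{1}" _ "\<lambda>_. A" n "\<lambda>_. m"] K assms by auto
  then show ?thesis by (simp add: Ev_def T_def x_def)
qed

end


context chg
begin

definition G :: "nat \<Rightarrow> 'a measure" where "G t = obs_sigma M N x t"
definition Gen :: "nat \<Rightarrow> 'a set set" where
  "Gen t = {x s -` A \<inter> space M | s A. s \<in> {1..t} \<and> A \<in> sets N}"
definition Cyl :: "nat \<Rightarrow> 'a set set" where
  "Cyl t = (\<lambda>A. {\<omega>\<in>space M. \<forall>s\<in>{1..t}. x s \<omega> \<in> A s}) ` {A. \<forall>s. A s \<in> sets N}"

lemma Gen_mem: "s \<in> {1..t} \<Longrightarrow> A \<in> sets N \<Longrightarrow> x s -` A \<inter> space M \<in> Gen t"
  unfolding Gen_def by blast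

lemma Gen_Pow: "Gen t \<subseteq> Pow (space M)" unfolding Gen_def by auto
lemma Gen_sets: "Gen t \<subseteq> sets M" unfolding Gen_def by auto

lemma space_G[simp]: "space (G t) = space M"
  unfolding G_def obs_sigma_def Gen_def[symmetric] by (simp add: space_measure_of_conv)

lemma sets_G: "sets (G t) = sigma_sets (space M) (Gen t)"
  unfolding G_def obs_sigma_def Gen_def[symmetric] using Gen_Pow by (simp add: sets_measure_of)

lemma sets_G_M: "sets (G t) \<subseteq> sets M"
  unfolding sets_G using Gen_sets by (simp add: sets.sigma_sets_subset)

lemma subalg_G: "subalgebra M (G t)"
  unfolding subalgebra_def using sets_G_M by simp

lemma subalg_G_density: "subalgebra (density M f) (G t)"
  unfolding subalgebra_def using sets_G_M by simp

lemma sfs_G: "sigma_finite_subalgebra M (G t)"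
proof -
  have "finite_measure_subalgebra M (G t)"
    unfolding finite_measure_subalgebra_def finite_measure_subalgebra_axioms_def
    using subalg_G by (simp add: finite_measure_axioms)
  then show ?thesis by (rule finite_measure_subalgebra_is_sigma_finite)
qed

lemma x_space: "\<omega> \<in> space M \<Longrightarrow> x s \<omega> \<in> space N"
  using measurable_space[OF x_m] by blast

lemma Gen_sub: "s \<in> {1..t} \<Longrightarrow> A \<in> sets N \<Longrightarrow> x s -` A \<inter> space M \<in> sets (G t)"
  unfolding sets_G Gen_def by auto

lemma x_G: "s \<in> {1..t} \<Longrightarrow> x s \<in> measurable (G t) N"
  by (rule measurableI) (auto simp: x_space intro: Gen_sub)

lemma G_mono: "t \<le> t' \<Longrightarrow> sets (G t) \<subseteq> sets (G t')"
  unfolding sets_G by (intro sigma_sets_subseteq) (force simp: Gen_def)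

lemma CylI: "(\<And>s. A s \<in> sets N) \<Longrightarrow> {\<omega>\<in>space M. \<forall>s\<in>{1..t}. x s \<omega> \<in> A s} \<in> Cyl t"
  unfolding Cyl_def by (rule image_eqI[OF refl]) simp

lemma CylE: "a \<in> Cyl t \<Longrightarrow> \<exists>A. (\<forall>s. A s \<in> sets N) \<and> a = {\<omega>\<in>space M. \<forall>s\<in>{1..t}. x s \<omega> \<in> A s}"
  unfolding Cyl_def by auto

lemma Cyl_Gen: "sigma_sets (space M) (Cyl t) = sigma_sets (space M) (Gen t)"
proof (rule sigma_sets_eqI)
  interpret S: sigma_algebra "space M" "sigma_sets (space M) (Gen t)"
    using Gen_Pow by (rule sigma_algebra_sigma_sets)
  fix a assume a0: "a \<in> Cyl t"
  obtain A where A: "\<And>s. A s \<in> sets N" and a: "a = {\<omega>\<in>space M. \<forall>s\<in>{1..t}. x s \<omega> \<in> A s}"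
    using CylE[OF a0] by blast
  have "a = space M \<inter> (\<Inter>s\<in>{1..t}. x s -` A s \<inter> space M)" unfolding a by auto
  also have "\<dots> \<in> sigma_sets (space M) (Gen t)"
  proof (cases "t = 0")
    case True
    have "space M \<inter> (\<Inter>s\<in>{1..t}. x s -` A s \<inter> space M) = space M" using True by simp
    then show ?thesis using S.top by metis
  next
    case False
    then have "(\<Inter>s\<in>{1..t}. x s -` A s \<inter> space M) \<in> sigma_sets (space M) (Gen t)"
      using A False by (intro S.finite_INT sigma_sets.Basic Gen_mem) auto
    then show ?thesis using S.Int S.top by blast
  qed
  finally show "a \<in> sigma_sets (space M) (Gen t)" .
next
  fix b assume "b \<in> Gen t"
  then obtain s A where s: "s \<in> {1..t}" "A \<in> sets N" "b = x s -` A \<inter> space M"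
    unfolding Gen_def by auto
  have "b = {\<omega>\<in>space M. \<forall>r\<in>{1..t}. x r \<omega> \<in> (if r = s then A else space N)}"
    using s by (auto simp: x_space)
  moreover have "\<dots> \<in> Cyl t" using s by (intro CylI) auto
  ultimately show "b \<in> sigma_sets (space M) (Cyl t)" by auto
qed

lemma sets_G_Cyl: "sets (G t) = sigma_sets (space M) (Cyl t)"
  by (simp add: sets_G Cyl_Gen)

lemma Cyl_Int_stable: "Int_stable (Cyl t)"
proof (rule Int_stableI)
  fix a b assume "a \<in> Cyl t" "b \<in> Cyl t"
  obtain A where A: "\<And>s. A s \<in> sets N" "a = {\<omega>\<in>space M. \<forall>s\<in>{1..t}. x s \<omega> \<in> A s}"
    using CylE[OF \<open>a \<in> Cyl t\<close>] by blast
  obtain B where B: "\<And>s. B s \<in> sets N" "b = {\<omega>\<in>space M. \<forall>s\<in>{1..t}. x s \<omega> \<in> B s}"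
    using CylE[OF \<open>b \<in> Cyl t\<close>] by blast
  have "a \<inter> b = {\<omega>\<in>space M. \<forall>s\<in>{1..t}. x s \<omega> \<in> A s \<inter> B s}" using A B by blast
  moreover have "\<dots> \<in> Cyl t" using A B by (intro CylI) auto
  ultimately show "a \<inter> b \<in> Cyl t" by simp
qed

lemma Cyl_Pow: "Cyl t \<subseteq> Pow (space M)" unfolding Cyl_def by auto

lemma space_Cyl: "space M \<in> Cyl t"
proof -
  have "space M = {\<omega>\<in>space M. \<forall>s\<in>{1..t}. x s \<omega> \<in> (\<lambda>_. space N) s}" by (auto simp: x_space)
  moreover have "\<dots> \<in> Cyl t" by (intro CylI) auto
  ultimately show ?thesis by simp
qed

lemma Tm_sets[measurable]: "{\<omega>\<in>space M. T \<omega> = m} \<in> sets M" by measurable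

lemma emeasure_restr_density:
  assumes [measurable]: "f \<in> borel_measurable M" and C: "C \<in> sets (G t)"
  shows "emeasure (restr_to_subalg (density M f) (G t)) C = (\<integral>\<^sup>+\<omega>. f \<omega> * indicator C \<omega> \<partial>M)"
proof -
  have [measurable]: "C \<in> sets M" using C sets_G_M by auto
  show ?thesis using emeasure_restr_to_subalg[OF subalg_G_density C] by (simp add: emeasure_density)
qed

definition Dm :: "nat \<Rightarrow> nat \<Rightarrow> 'b set \<Rightarrow> ennreal" where
  "Dm m s A = (\<integral>\<^sup>+ y \<in> A. ennreal (dens m s y) \<partial>N)"

lemma onestep:
  assumes C: "C \<in> sets (G t)" and A[measurable]: "A \<in> sets N"
  shows "emeasure M {\<omega>\<in>C. x (Suc t) \<omega> \<in> A \<and> T \<omega> = m} =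
         emeasure M {\<omega>\<in>C. T \<omega> = m} * Dm m (Suc t) A"
proof -
  define Z1 where "Z1 = {\<omega>\<in>space M. x (Suc t) \<omega> \<in> A \<and> T \<omega> = m}"
  define Z2 where "Z2 = {\<omega>\<in>space M. T \<omega> = m}"
  have [measurable]: "Z1 \<in> sets M" "Z2 \<in> sets M" unfolding Z1_def Z2_def by measurable
  define \<mu>1 where "\<mu>1 = restr_to_subalg (density M (indicator Z1)) (G t)"
  define \<mu>2 where "\<mu>2 = restr_to_subalg (density M (\<lambda>\<omega>. Dm m (Suc t) A * indicator Z2 \<omega>)) (G t)"
  have e1: "emeasure \<mu>1 D = emeasure M (Z1 \<inter> D)" if "D \<in> sets (G t)" for D
  proof -
    have [measurable]: "D \<in> sets M" using that sets_G_M by auto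
    have "emeasure \<mu>1 D = (\<integral>\<^sup>+\<omega>. indicator Z1 \<omega> * indicator D \<omega> \<partial>M)"
      unfolding \<mu>1_def by (rule emeasure_restr_density[OF _ that]) simp
    also have "\<dots> = (\<integral>\<^sup>+\<omega>. indicator (Z1 \<inter> D) \<omega> \<partial>M)" by (simp add: indicator_inter_arith)
    finally show ?thesis by simp
  qed
  have e2: "emeasure \<mu>2 D = Dm m (Suc t) A * emeasure M (Z2 \<inter> D)" if "D \<in> sets (G t)" for D
  proof -
    have [measurable]: "D \<in> sets M" using that sets_G_M by auto
    have "emeasure \<mu>2 D = (\<integral>\<^sup>+\<omega>. Dm m (Suc t) A * indicator Z2 \<omega> * indicator D \<omega> \<partial>M)"
      unfolding \<mu>2_def by (rule emeasure_restr_density[OF _ that]) simp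
    also have "\<dots> = (\<integral>\<^sup>+\<omega>. Dm m (Suc t) A * indicator (Z2 \<inter> D) \<omega> \<partial>M)"
      by (simp add: indicator_inter_arith mult.assoc)
    also have "\<dots> = Dm m (Suc t) A * emeasure M (Z2 \<inter> D)"
      by (simp add: nn_integral_cmult)
    finally show ?thesis .
  qed
  have "\<mu>1 = \<mu>2"
  proof (rule measure_eqI_generator_eq[OF Cyl_Int_stable Cyl_Pow])
    show "sets \<mu>1 = sigma_sets (space M) (Cyl t)" unfolding \<mu>1_def
      by (simp add: sets_restr_to_subalg[OF subalg_G_density] sets_G_Cyl)
    show "sets \<mu>2 = sigma_sets (space M) (Cyl t)" unfolding \<mu>2_def
      by (simp add: sets_restr_to_subalg[OF subalg_G_density] sets_G_Cyl)
    show "range (\<lambda>i. space M) \<subseteq> Cyl t" using space_Cyl by auto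
    show "(\<Union>i. space M) = space M" by simp
    show "emeasure \<mu>1 (space M) \<noteq> \<infinity>" for i :: nat
      using e1[OF sets.top] by (simp add: emeasure_eq_measure)
  next
    fix D assume D0: "D \<in> Cyl t"
    obtain B where B[measurable]: "\<And>s. B s \<in> sets N" and D: "D = {\<omega>\<in>space M. \<forall>s\<in>{1..t}. x s \<omega> \<in> B s}"
      using CylE[OF D0] by blast
    have DG: "D \<in> sets (G t)" using \<open>D \<in> Cyl t\<close> sets_G_Cyl by auto
    define B' where "B' = B(Suc t := A)"
    have B'[measurable]: "\<And>s. B' s \<in> sets N" by (simp add: B'_def)
    have "Z1 \<inter> D = {\<omega>\<in>space M. T \<omega> = m \<and> (\<forall>s\<in>{1..Suc t}. x s \<omega> \<in> B' s)}"
      unfolding Z1_def D B'_def by (auto simp: le_Suc_eq) (metis atLeastAtMost_iff le_refl Suc_le_mono le0)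
    then have "emeasure M (Z1 \<inter> D) = ennreal (\<theta> * (1 - \<theta>) ^ m) *
        (\<Prod>s\<in>{1..Suc t}. \<integral>\<^sup>+ y \<in> B' s. ennreal (dens m s y) \<partial>N)"
      using fact1[OF B'] by simp
    also have "(\<Prod>s\<in>{1..Suc t}. \<integral>\<^sup>+ y \<in> B' s. ennreal (dens m s y) \<partial>N) =
        Dm m (Suc t) A * (\<Prod>s\<in>{1..t}. \<integral>\<^sup>+ y \<in> B s. ennreal (dens m s y) \<partial>N)"
    proof -
      have "(\<Prod>s\<in>{1..t}. \<integral>\<^sup>+ y \<in> B' s. ennreal (dens m s y) \<partial>N) = (\<Prod>s\<in>{1..t}. \<integral>\<^sup>+ y \<in> B s. ennreal (dens m s y) \<partial>N)"
        by (intro prod.cong) (auto simp: B'_def)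
      then show ?thesis by (simp add: Dm_def B'_def mult.commute)
    qed
    also have "Z2 \<inter> D = {\<omega>\<in>space M. T \<omega> = m \<and> (\<forall>s\<in>{1..t}. x s \<omega> \<in> B s)}"
      unfolding Z2_def D by auto
    ultimately show "emeasure \<mu>1 D = emeasure \<mu>2 D"
      unfolding e1[OF DG] e2[OF DG] using fact1[OF B] by (simp add: ac_simps)
  qed
  have CM: "C \<subseteq> space M" using C sets_G_M sets.sets_into_space by blast
  have "emeasure M {\<omega>\<in>C. x (Suc t) \<omega> \<in> A \<and> T \<omega> = m} = emeasure \<mu>1 C"
    using CM by (simp add: e1[OF C]) (intro arg_cong[where f="emeasure M"], auto simp: Z1_def)
  also have "\<dots> = emeasure \<mu>2 C" by (simp add: \<open>\<mu>1 = \<mu>2\<close>)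
  also have "\<dots> = emeasure M {\<omega>\<in>C. T \<omega> = m} * Dm m (Suc t) A"
  proof -
    have "Z2 \<inter> C = {\<omega>\<in>C. T \<omega> = m}" using CM by (auto simp: Z2_def)
    then show ?thesis by (simp add: e2[OF C] mult.commute)
  qed
  finally show ?thesis .
qed



end


context chg
begin

lemma id_G: "(\<lambda>\<omega>. \<omega>) \<in> measurable M (G t)"
  using measurable_from_subalg[OF subalg_G[of t] measurable_ident_sets[OF refl]] .

lemma int_meas:
  assumes H: "H \<in> borel_measurable (F \<Otimes>\<^sub>M N)" and g[measurable]: "g \<in> borel_measurable N"
    and fin: "(\<integral>\<^sup>+y. ennreal (g y) \<partial>N) \<noteq> \<infinity>"
  shows "(\<lambda>\<omega>. \<integral>\<^sup>+y. ennreal (g y) * H (\<omega>, y) \<partial>N) \<in> borel_measurable F"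
proof -
  define D where "D = density N (\<lambda>y. ennreal (g y))"
  have sD: "sets D = sets N" "space D = space N" unfolding D_def by simp_all
  have "finite_measure D"
  proof (rule finite_measureI)
    have "emeasure D (space D) = (\<integral>\<^sup>+y. ennreal (g y) * indicator (space N) y \<partial>N)"
      unfolding sD(2) unfolding D_def by (rule emeasure_density) simp_all
    also have "\<dots> = (\<integral>\<^sup>+y. ennreal (g y) \<partial>N)" by (intro nn_integral_cong) simp
    finally show "emeasure D (space D) \<noteq> \<infinity>" using fin by simp
  qed
  then interpret D: finite_measure D .
  have "(\<lambda>\<omega>. \<integral>\<^sup>+y. H (\<omega>, y) \<partial>D) \<in> borel_measurable F"
    by (intro D.borel_measurable_nn_integral_fst)
      (unfold measurable_cong_sets[OF sets_pair_measure_cong[OF refl sD(1)] refl], rule H)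
  moreover have "\<And>\<omega>. \<omega> \<in> space F \<Longrightarrow> (\<integral>\<^sup>+y. H (\<omega>, y) \<partial>D) = (\<integral>\<^sup>+y. ennreal (g y) * H (\<omega>, y) \<partial>N)"
  proof -
    fix \<omega> assume "\<omega> \<in> space F"
    then have Hy: "(\<lambda>y. H (\<omega>, y)) \<in> borel_measurable N" by (rule measurable_Pair2[OF H])
    have m1: "(\<lambda>y. ennreal (g y)) \<in> borel_measurable N" by measurable
    show "(\<integral>\<^sup>+y. H (\<omega>, y) \<partial>D) = (\<integral>\<^sup>+y. ennreal (g y) * H (\<omega>, y) \<partial>N)"
      unfolding D_def by (rule nn_integral_density[OF m1 Hy])
  qed
  ultimately show ?thesis by (rule measurable_cong[THEN iffD1, rotated])
qed

lemma dens_fin: "(\<integral>\<^sup>+y. ennreal (dens m s y) \<partial>N) \<noteq> \<infinity>"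
  using pint qint by (cases "s \<le> m") (simp_all add: dens_def)

lemma pairf:
  assumes H[measurable]: "H \<in> borel_measurable (G t \<Otimes>\<^sub>M N)"
  shows "(\<integral>\<^sup>+\<omega>. indicator {\<omega>\<in>space M. T \<omega> = m} \<omega> * H (\<omega>, x (Suc t) \<omega>) \<partial>M) =
         (\<integral>\<^sup>+\<omega>. indicator {\<omega>\<in>space M. T \<omega> = m} \<omega> *
              (\<integral>\<^sup>+y. ennreal (dens m (Suc t) y) * H (\<omega>, y) \<partial>N) \<partial>M)"
proof -
  define Zm where "Zm = {\<omega>\<in>space M. T \<omega> = m}"
  have Zm[measurable]: "Zm \<in> sets M" unfolding Zm_def by measurable
  define Md where "Md = density M (indicator Zm)"
  have sMd[measurable_cong]: "sets Md = sets M" unfolding Md_def by simp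
  have spMd: "space Md = space M" unfolding Md_def by simp
  define \<nu> where "\<nu> = restr_to_subalg Md (G t)"
  define D where "D = density N (\<lambda>y. ennreal (dens m (Suc t) y))"
  have sub: "subalgebra Md (G t)" unfolding Md_def by (rule subalg_G_density)
  have snu: "sets \<nu> = sets (G t)" unfolding \<nu>_def by (rule sets_restr_to_subalg[OF sub])
  have spnu: "space \<nu> = space M" unfolding \<nu>_def by (simp add: space_restr_to_subalg spMd)
  have sD: "sets D = sets N" "space D = space N" unfolding D_def by simp_all
  have enu: "emeasure \<nu> C = emeasure M {\<omega>\<in>C. T \<omega> = m}" if C: "C \<in> sets (G t)" for C
  proof -
    have CM[measurable]: "C \<in> sets M" using C sets_G_M by auto
    have "emeasure \<nu> C = emeasure Md C" unfolding \<nu>_def by (rule emeasure_restr_to_subalg[OF sub C])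
    also have "\<dots> = (\<integral>\<^sup>+\<omega>. indicator (Zm \<inter> C) \<omega> \<partial>M)" unfolding Md_def
      by (simp add: emeasure_density indicator_inter_arith)
    also have "\<dots> = emeasure M (Zm \<inter> C)" by simp
    also have "Zm \<inter> C = {\<omega>\<in>C. T \<omega> = m}" using sets.sets_into_space[OF CM] by (auto simp: Zm_def)
    finally show ?thesis .
  qed
  have eD: "emeasure D B = Dm m (Suc t) B" if "B \<in> sets N" for B
    unfolding D_def Dm_def using that by (simp add: emeasure_density)
  have fin_nu: "finite_measure \<nu>"
  proof (rule finite_measureI)
    have "emeasure \<nu> (space \<nu>) = emeasure M {\<omega>\<in>space M. T \<omega> = m}"
      unfolding spnu by (rule enu) (metis sets.top space_G)
    also have "\<dots> \<noteq> \<infinity>" by (simp add: emeasure_eq_measure)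
    finally show "emeasure \<nu> (space \<nu>) \<noteq> \<infinity>" .
  qed
  have fin_D: "finite_measure D"
  proof (rule finite_measureI)
    have "emeasure D (space D) = 1" unfolding sD(2) eD[OF sets.top] Dm_def by (rule dens_int)
    then show "emeasure D (space D) \<noteq> \<infinity>" by simp
  qed
  interpret nu: finite_measure \<nu> by (rule fin_nu)
  interpret D: finite_measure D by (rule fin_D)
  define L where "L = distr Md (G t \<Otimes>\<^sub>M N) (\<lambda>\<omega>. (\<omega>, x (Suc t) \<omega>))"
  have mp[measurable]: "(\<lambda>\<omega>. (\<omega>, x (Suc t) \<omega>)) \<in> measurable Md (G t \<Otimes>\<^sub>M N)"
    unfolding measurable_cong_sets[OF sMd refl] by (rule measurable_Pair[OF id_G x_m])
  have "\<nu> \<Otimes>\<^sub>M D = L"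
  proof (rule pair_measure_eqI)
    show "sigma_finite_measure \<nu>" "sigma_finite_measure D" by unfold_locales
    show "sets (\<nu> \<Otimes>\<^sub>M D) = sets L" unfolding L_def
      by (simp add: sets_pair_measure_cong[OF snu sD(1)])
    fix C B assume C: "C \<in> sets \<nu>" and B: "B \<in> sets D"
    have C': "C \<in> sets (G t)" using C snu by simp
    have B'[measurable]: "B \<in> sets N" using B sD by simp
    have CM[measurable]: "C \<in> sets M" using C' sets_G_M by auto
    have CB: "C \<times> B \<in> sets (G t \<Otimes>\<^sub>M N)" by (rule pair_measureI[OF C' B'])
    have pre: "(\<lambda>\<omega>. (\<omega>, x (Suc t) \<omega>)) -` (C \<times> B) \<inter> space Md = {\<omega>\<in>C. x (Suc t) \<omega> \<in> B}"
      using sets.sets_into_space[OF CM] by (auto simp: spMd)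
    have Sm[measurable]: "{\<omega>\<in>C. x (Suc t) \<omega> \<in> B} \<in> sets M"
    proof -
      have "{\<omega>\<in>C. x (Suc t) \<omega> \<in> B} = C \<inter> (x (Suc t) -` B \<inter> space M)"
        using sets.sets_into_space[OF CM] by auto
      then show ?thesis using CM measurable_sets[OF x_m B'] by auto
    qed
    have "emeasure L (C \<times> B) = emeasure Md {\<omega>\<in>C. x (Suc t) \<omega> \<in> B}"
      unfolding L_def emeasure_distr[OF mp CB] pre ..
    also have "\<dots> = (\<integral>\<^sup>+\<omega>. indicator Zm \<omega> * indicator {\<omega>\<in>C. x (Suc t) \<omega> \<in> B} \<omega> \<partial>M)"
      unfolding Md_def by (rule emeasure_density) (simp_all add: Sm)
    also have "\<dots> = (\<integral>\<^sup>+\<omega>. indicator (Zm \<inter> {\<omega>\<in>C. x (Suc t) \<omega> \<in> B}) \<omega> \<partial>M)"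
      by (simp add: indicator_inter_arith)
    also have "\<dots> = emeasure M (Zm \<inter> {\<omega>\<in>C. x (Suc t) \<omega> \<in> B})"
      by (rule nn_integral_indicator) (simp add: Sm)
    also have "Zm \<inter> {\<omega>\<in>C. x (Suc t) \<omega> \<in> B} = {\<omega>\<in>C. x (Suc t) \<omega> \<in> B \<and> T \<omega> = m}"
      using sets.sets_into_space[OF CM] by (auto simp: Zm_def)
    finally have eL: "emeasure L (C \<times> B) = emeasure M {\<omega>\<in>C. x (Suc t) \<omega> \<in> B \<and> T \<omega> = m}" .
    show "emeasure \<nu> C * emeasure D B = emeasure L (C \<times> B)"
      unfolding eL onestep[OF C' B'] by (simp add: enu[OF C'] eD[OF B'])
  qed
  have Hx: "(\<lambda>\<omega>. H (\<omega>, x (Suc t) \<omega>)) \<in> borel_measurable M"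
    using measurable_comp[OF mp H] by (simp add: comp_def measurable_cong_sets[OF sMd refl])
  have phiM: "(\<lambda>\<omega>. \<integral>\<^sup>+y. ennreal (dens m (Suc t) y) * H (\<omega>, y) \<partial>N) \<in> borel_measurable M"
    by (rule measurable_from_subalg[OF subalg_G int_meas[OF H dens_m dens_fin]])
  have "(\<integral>\<^sup>+\<omega>. indicator Zm \<omega> * H (\<omega>, x (Suc t) \<omega>) \<partial>M) = (\<integral>\<^sup>+\<omega>. H (\<omega>, x (Suc t) \<omega>) \<partial>Md)"
    unfolding Md_def by (rule nn_integral_density[symmetric]) (simp_all add: Hx)
  also have "\<dots> = (\<integral>\<^sup>+z. H z \<partial>L)" unfolding L_def by (rule nn_integral_distr[symmetric, OF mp]) simp
  also have "\<dots> = (\<integral>\<^sup>+z. H z \<partial>(\<nu> \<Otimes>\<^sub>M D))" unfolding \<open>\<nu> \<Otimes>\<^sub>M D = L\<close> ..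
  also have "\<dots> = (\<integral>\<^sup>+\<omega>. \<integral>\<^sup>+y. H (\<omega>, y) \<partial>D \<partial>\<nu>)"
  proof -
    have "H \<in> borel_measurable (\<nu> \<Otimes>\<^sub>M D)"
      unfolding measurable_cong_sets[OF sets_pair_measure_cong[OF snu sD(1)] refl] by (rule H)
    then show ?thesis by (rule D.nn_integral_fst[symmetric])
  qed
  also have "\<dots> = (\<integral>\<^sup>+\<omega>. \<integral>\<^sup>+y. ennreal (dens m (Suc t) y) * H (\<omega>, y) \<partial>N \<partial>\<nu>)"
  proof (rule nn_integral_cong)
    fix \<omega> assume "\<omega> \<in> space \<nu>"
    then have "\<omega> \<in> space (G t)" by (simp add: spnu)
    then have Hy: "(\<lambda>y. H (\<omega>, y)) \<in> borel_measurable N" by (rule measurable_Pair2[OF H])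
    have m1: "(\<lambda>y. ennreal (dens m (Suc t) y)) \<in> borel_measurable N" by measurable
    show "(\<integral>\<^sup>+y. H (\<omega>, y) \<partial>D) = (\<integral>\<^sup>+y. ennreal (dens m (Suc t) y) * H (\<omega>, y) \<partial>N)"
      unfolding D_def by (rule nn_integral_density[OF m1 Hy])
  qed
  also have "\<dots> = (\<integral>\<^sup>+\<omega>. \<integral>\<^sup>+y. ennreal (dens m (Suc t) y) * H (\<omega>, y) \<partial>N \<partial>Md)"
  proof -
    have "(\<lambda>\<omega>. \<integral>\<^sup>+y. H (\<omega>, y) \<partial>D) \<in> borel_measurable \<nu>"
      by (intro D.borel_measurable_nn_integral_fst)
        (unfold measurable_cong_sets[OF sets_pair_measure_cong[OF snu sD(1)] refl], rule H)
    moreover have "\<And>\<omega>. \<omega> \<in> space \<nu> \<Longrightarrow> (\<integral>\<^sup>+y. H (\<omega>, y) \<partial>D) = (\<integral>\<^sup>+y. ennreal (dens m (Suc t) y) * H (\<omega>, y) \<partial>N)"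
    proof -
      fix \<omega> assume "\<omega> \<in> space \<nu>"
      then have "\<omega> \<in> space (G t)" by (simp add: spnu)
      then have Hy: "(\<lambda>y. H (\<omega>, y)) \<in> borel_measurable N" by (rule measurable_Pair2[OF H])
      have m1: "(\<lambda>y. ennreal (dens m (Suc t) y)) \<in> borel_measurable N" by measurable
      show "(\<integral>\<^sup>+y. H (\<omega>, y) \<partial>D) = (\<integral>\<^sup>+y. ennreal (dens m (Suc t) y) * H (\<omega>, y) \<partial>N)"
        unfolding D_def by (rule nn_integral_density[OF m1 Hy])
    qed
    ultimately have "(\<lambda>\<omega>. \<integral>\<^sup>+y. ennreal (dens m (Suc t) y) * H (\<omega>, y) \<partial>N) \<in> borel_measurable \<nu>"
      by (rule measurable_cong[THEN iffD1, rotated])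
    then have "(\<lambda>\<omega>. \<integral>\<^sup>+y. ennreal (dens m (Suc t) y) * H (\<omega>, y) \<partial>N) \<in> borel_measurable (G t)"
      by (simp add: measurable_cong_sets[OF snu refl])
    then show ?thesis unfolding \<nu>_def by (rule nn_integral_subalgebra2[OF sub])
  qed
  also have "\<dots> = (\<integral>\<^sup>+\<omega>. indicator Zm \<omega> * (\<integral>\<^sup>+y. ennreal (dens m (Suc t) y) * H (\<omega>, y) \<partial>N) \<partial>M)"
    unfolding Md_def by (rule nn_integral_density) (simp_all add: phiM)
  finally show ?thesis unfolding Zm_def .
qed

end


context chg
begin

definition ell :: "nat \<Rightarrow> nat \<Rightarrow> 'a \<Rightarrow> real" where
  "ell t m \<omega> = \<theta> * (1 - \<theta>) ^ m * (\<Prod>s\<in>{1..t}. dens m s (x s \<omega>))"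
definition Pp :: "nat \<Rightarrow> 'a \<Rightarrow> real" where
  "Pp t \<omega> = (\<Prod>s\<in>{1..t}. p (x s \<omega>))"
definition aa :: "nat \<Rightarrow> 'a \<Rightarrow> real" where "aa t \<omega> = (\<Sum>m<t. ell t m \<omega>)"
definition bb :: "nat \<Rightarrow> 'a \<Rightarrow> real" where "bb t \<omega> = (1 - \<theta>) ^ t * Pp t \<omega>"
definition Lam :: "nat \<Rightarrow> 'a \<Rightarrow> real" where "Lam t \<omega> = aa t \<omega> + bb t \<omega>"
definition r :: "nat \<Rightarrow> nat \<Rightarrow> 'a \<Rightarrow> real" where "r t m \<omega> = ell t m \<omega> / Lam t \<omega>"
definition pii :: "nat \<Rightarrow> 'a \<Rightarrow> real" where "pii t \<omega> = aa t \<omega> / Lam t \<omega>"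
definition ww :: "nat \<Rightarrow> 'a \<Rightarrow> real" where "ww t \<omega> = (aa t \<omega> + \<theta> * bb t \<omega>) / Lam t \<omega>"
definition vv :: "nat \<Rightarrow> 'a \<Rightarrow> real" where "vv t \<omega> = (1 - \<theta>) * bb t \<omega> / Lam t \<omega>"
definition rho :: "nat \<Rightarrow> 'a \<Rightarrow> 'b \<Rightarrow> real" where "rho t \<omega> y = ww t \<omega> * q y + vv t \<omega> * p y"

lemma th_ge: "0 \<le> \<theta>" "0 \<le> 1 - \<theta>" using th0 th1 by auto

lemma ell_nn: "ell t m \<omega> \<ge> 0"
  unfolding ell_def using th_ge dens_nn by (intro mult_nonneg_nonneg prod_nonneg) auto
lemma Pp_nn: "Pp t \<omega> \<ge> 0" unfolding Pp_def using p0 by (intro prod_nonneg) auto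
lemma aa_nn: "aa t \<omega> \<ge> 0" unfolding aa_def using ell_nn by (intro sum_nonneg) auto
lemma bb_nn: "bb t \<omega> \<ge> 0" unfolding bb_def using Pp_nn th_ge by simp
lemma Lam_nn: "Lam t \<omega> \<ge> 0" unfolding Lam_def using aa_nn bb_nn by (simp add: add_nonneg_nonneg)
lemma r_nn: "r t m \<omega> \<ge> 0" unfolding r_def using ell_nn Lam_nn by simp
lemma pii_nn: "pii t \<omega> \<ge> 0" unfolding pii_def using aa_nn Lam_nn by simp
lemma ww_nn: "ww t \<omega> \<ge> 0" unfolding ww_def using aa_nn bb_nn Lam_nn th_ge by simp
lemma vv_nn: "vv t \<omega> \<ge> 0" unfolding vv_def using bb_nn Lam_nn th_ge by simp
lemma rho_nn: "rho t \<omega> y \<ge> 0" unfolding rho_def using ww_nn vv_nn p0 q0 by (simp add: add_nonneg_nonneg)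

lemma ell_ge: "t \<le> m \<Longrightarrow> ell t m \<omega> = \<theta> * (1 - \<theta>) ^ m * Pp t \<omega>"
  unfolding ell_def Pp_def by (auto intro!: prod.cong simp: dens_def)

lemma ell_Suc: "ell (Suc t) m \<omega> = ell t m \<omega> * dens m (Suc t) (x (Suc t) \<omega>)"
  unfolding ell_def by (simp add: atLeastAtMostSuc_conv prod.insert mult_ac)

lemma Pp_Suc: "Pp (Suc t) \<omega> = Pp t \<omega> * p (x (Suc t) \<omega>)"
  unfolding Pp_def by (simp add: atLeastAtMostSuc_conv prod.insert mult_ac)

lemma ell_tt: "ell t t \<omega> = \<theta> * bb t \<omega>"
  using ell_ge[of t t] by (simp add: bb_def)

lemma aa_Suc: "aa (Suc t) \<omega> = (aa t \<omega> + \<theta> * bb t \<omega>) * q (x (Suc t) \<omega>)"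
proof -
  have "aa (Suc t) \<omega> = (\<Sum>m<Suc t. ell t m \<omega> * q (x (Suc t) \<omega>))"
    unfolding aa_def ell_Suc by (intro sum.cong) (auto simp: dens_def)
  also have "\<dots> = (aa t \<omega> + ell t t \<omega>) * q (x (Suc t) \<omega>)"
    by (simp add: aa_def sum_distrib_right distrib_right)
  finally show ?thesis by (simp add: ell_tt)
qed

lemma bb_Suc: "bb (Suc t) \<omega> = (1 - \<theta>) * bb t \<omega> * p (x (Suc t) \<omega>)"
  unfolding bb_def Pp_Suc by (simp add: mult_ac)

lemma Lam0: "Lam t \<omega> = 0 \<Longrightarrow> aa t \<omega> = 0 \<and> bb t \<omega> = 0"
  using aa_nn[of t \<omega>] bb_nn[of t \<omega>] unfolding Lam_def by linarith

lemma Lam_rho: "Lam t \<omega> * rho t \<omega> y = (aa t \<omega> + \<theta> * bb t \<omega>) * q y + (1 - \<theta>) * bb t \<omega> * p y"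
proof (cases "Lam t \<omega> = 0")
  case True then show ?thesis using Lam0[OF True] by simp
next
  case False then show ?thesis unfolding rho_def ww_def vv_def by (simp add: field_simps)
qed

lemma Lam_Suc: "Lam (Suc t) \<omega> = Lam t \<omega> * rho t \<omega> (x (Suc t) \<omega>)"
  unfolding Lam_rho by (simp add: Lam_def aa_Suc bb_Suc)

lemma r_Suc: "r (Suc t) m \<omega> = r t m \<omega> * (dens m (Suc t) (x (Suc t) \<omega>) / rho t \<omega> (x (Suc t) \<omega>))"
  unfolding r_def ell_Suc Lam_Suc by simp

lemma ww_vv: "Lam t \<omega> > 0 \<Longrightarrow> ww t \<omega> + vv t \<omega> = 1"
proof -
  assume "Lam t \<omega> > 0"
  then have "Lam t \<omega> \<noteq> 0" by simp
  have "ww t \<omega> + vv t \<omega> = (aa t \<omega> + \<theta> * bb t \<omega> + (1 - \<theta>) * bb t \<omega>) / Lam t \<omega>"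
    unfolding ww_def vv_def by (simp add: add_divide_distrib)
  also have "\<dots> = Lam t \<omega> / Lam t \<omega>" by (simp add: Lam_def algebra_simps)
  finally show ?thesis using \<open>Lam t \<omega> \<noteq> 0\<close> by simp
qed

lemma rho_dens:
  assumes "Lam t \<omega> > 0"
  shows "rho t \<omega> y * (dens m s y / rho t \<omega> y) = dens m s y"
proof (cases "rho t \<omega> y = 0")
  case False then show ?thesis by simp
next
  case True
  have w: "ww t \<omega> \<ge> 0" "vv t \<omega> \<ge> 0" "ww t \<omega> + vv t \<omega> = 1" using ww_nn vv_nn ww_vv[OF assms] by auto
  have pq: "p y = 0 \<and> q y = 0"
  proof (cases "ww t \<omega> > 0")
    case True
    have "ww t \<omega> * q y = 0" using True w p0[of y] q0[of y] \<open>rho t \<omega> y = 0\<close> unfolding rho_def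
      by (metis add_nonneg_eq_0_iff mult_nonneg_nonneg)
    then have "q y = 0" using True by simp
    then show ?thesis using pq[of y] p0[of y] by auto
  next
    case False
    then have "vv t \<omega> = 1" using w by auto
    then have "p y = 0" using w p0[of y] q0[of y] \<open>rho t \<omega> y = 0\<close> unfolding rho_def
      by (metis add_nonneg_eq_0_iff mult_nonneg_nonneg mult_1)
    then show ?thesis using pq[of y] q0[of y] by auto
  qed
  then show ?thesis by (simp add: dens_def)
qed

lemma pii_sum: "pii t \<omega> = (\<Sum>m<t. r t m \<omega>)"
  unfolding pii_def r_def aa_def by (simp add: sum_divide_distrib)

lemma rho_sums: "(\<lambda>m. r t m \<omega> * dens m (Suc t) y) sums rho t \<omega> y"
proof -
  define K where "K = Pp t \<omega> / Lam t \<omega> * p y"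
  have tail: "r t (i + Suc t) \<omega> * dens (i + Suc t) (Suc t) y = \<theta> * (1 - \<theta>) ^ (Suc t) * K * (1 - \<theta>) ^ i" for i
    unfolding r_def K_def by (subst ell_ge) (auto simp: dens_def power_add)
  have g: "(\<lambda>i. (1 - \<theta>) ^ i) sums (1 / (1 - (1 - \<theta>)))" using th0 th1 by (intro geometric_sums) auto
  have "(\<lambda>i. \<theta> * (1 - \<theta>) ^ (Suc t) * K * (1 - \<theta>) ^ i) sums (\<theta> * (1 - \<theta>) ^ (Suc t) * K * (1 / (1 - (1 - \<theta>))))"
    by (rule sums_mult[OF g])
  moreover have "\<theta> * (1 - \<theta>) ^ (Suc t) * K * (1 / (1 - (1 - \<theta>))) = (1 - \<theta>) ^ (Suc t) * K"
    using th0 by simp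
  ultimately have "(\<lambda>i. r t (i + Suc t) \<omega> * dens (i + Suc t) (Suc t) y) sums ((1 - \<theta>) ^ (Suc t) * K)"
    unfolding tail by simp
  then have "(\<lambda>m. r t m \<omega> * dens m (Suc t) y) sums ((1 - \<theta>) ^ (Suc t) * K + (\<Sum>m<Suc t. r t m \<omega> * dens m (Suc t) y))"
    by (subst sums_iff_shift[symmetric])
  moreover have "(\<Sum>m<Suc t. r t m \<omega> * dens m (Suc t) y) = (aa t \<omega> + \<theta> * bb t \<omega>) / Lam t \<omega> * q y"
  proof -
    have "(\<Sum>m<Suc t. r t m \<omega> * dens m (Suc t) y) = (\<Sum>m<Suc t. r t m \<omega>) * q y"
      by (simp add: sum_distrib_right dens_def distrib_right)
    also have "(\<Sum>m<Suc t. r t m \<omega>) = (aa t \<omega> + \<theta> * bb t \<omega>) / Lam t \<omega>"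
      by (simp add: r_def aa_def ell_tt sum_divide_distrib add_divide_distrib)
    finally show ?thesis .
  qed
  moreover have "(1 - \<theta>) ^ (Suc t) * K + (aa t \<omega> + \<theta> * bb t \<omega>) / Lam t \<omega> * q y = rho t \<omega> y"
    unfolding rho_def ww_def vv_def K_def bb_def by (simp add: field_simps)
  ultimately show ?thesis by simp
qed



lemma ell_G[measurable]: "ell t m \<in> borel_measurable (G t)"
proof -
  have "(\<lambda>\<omega>. \<theta> * (1 - \<theta>) ^ m * (\<Prod>s\<in>{1..t}. dens m s (x s \<omega>))) \<in> borel_measurable (G t)"
    by (intro borel_measurable_times borel_measurable_const borel_measurable_prod
        measurable_compose[OF x_G dens_m])
  then show ?thesis unfolding ell_def[abs_def] .
qed

lemma Pp_G[measurable]: "Pp t \<in> borel_measurable (G t)"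
proof -
  have "(\<lambda>\<omega>. (\<Prod>s\<in>{1..t}. p (x s \<omega>))) \<in> borel_measurable (G t)"
    by (intro borel_measurable_prod measurable_compose[OF x_G pm])
  then show ?thesis unfolding Pp_def[abs_def] .
qed

lemma aa_G[measurable]: "aa t \<in> borel_measurable (G t)"
  unfolding aa_def[abs_def] by measurable
lemma bb_G[measurable]: "bb t \<in> borel_measurable (G t)"
  unfolding bb_def[abs_def] by measurable
lemma Lam_G[measurable]: "Lam t \<in> borel_measurable (G t)"
  unfolding Lam_def[abs_def] by measurable
lemma r_G[measurable]: "r t m \<in> borel_measurable (G t)"
  unfolding r_def[abs_def] by measurable
lemma pii_G[measurable]: "pii t \<in> borel_measurable (G t)"
  unfolding pii_def[abs_def] by measurable
lemma ww_G[measurable]: "ww t \<in> borel_measurable (G t)"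
  unfolding ww_def[abs_def] by measurable
lemma vv_G[measurable]: "vv t \<in> borel_measurable (G t)"
  unfolding vv_def[abs_def] by measurable

lemma toM: "f \<in> borel_measurable (G t) \<Longrightarrow> f \<in> borel_measurable M"
  by (rule measurable_from_subalg[OF subalg_G])

lemma rho_GN[measurable]: "(\<lambda>z. rho t (fst z) (snd z)) \<in> borel_measurable (G t \<Otimes>\<^sub>M N)"
  unfolding rho_def by measurable

end


context chg
begin

definition Sprop :: "nat \<Rightarrow> bool" where
  "Sprop t \<longleftrightarrow> (\<forall>m C. C \<in> sets (G t) \<longrightarrow>
      emeasure M {\<omega>\<in>C. T \<omega> = m} = (\<integral>\<^sup>+\<omega>. ennreal (r t m \<omega>) * indicator C \<omega> \<partial>M))"

lemma S_fun:
  assumes S: "Sprop t" and phi[measurable]: "\<phi> \<in> borel_measurable (G t)"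
  shows "(\<integral>\<^sup>+\<omega>. indicator {\<omega>\<in>space M. T \<omega> = m} \<omega> * \<phi> \<omega> \<partial>M) = (\<integral>\<^sup>+\<omega>. ennreal (r t m \<omega>) * \<phi> \<omega> \<partial>M)"
proof -
  define Zm where "Zm = {\<omega>\<in>space M. T \<omega> = m}"
  have Zm[measurable]: "Zm \<in> sets M" unfolding Zm_def by measurable
  have rM[measurable]: "r t m \<in> borel_measurable M" by (rule toM) measurable
  define \<mu>1 where "\<mu>1 = restr_to_subalg (density M (indicator Zm)) (G t)"
  define \<mu>2 where "\<mu>2 = restr_to_subalg (density M (\<lambda>\<omega>. ennreal (r t m \<omega>))) (G t)"
  have "\<mu>1 = \<mu>2"
  proof (rule measure_eqI)
    show "sets \<mu>1 = sets \<mu>2" unfolding \<mu>1_def \<mu>2_def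
      by (simp add: sets_restr_to_subalg[OF subalg_G_density])
    fix C assume "C \<in> sets \<mu>1"
    then have C: "C \<in> sets (G t)" unfolding \<mu>1_def by (simp add: sets_restr_to_subalg[OF subalg_G_density])
    have CM[measurable]: "C \<in> sets M" using C sets_G_M by auto
    have "emeasure \<mu>1 C = (\<integral>\<^sup>+\<omega>. indicator Zm \<omega> * indicator C \<omega> \<partial>M)"
      unfolding \<mu>1_def by (rule emeasure_restr_density[OF _ C]) simp
    also have "\<dots> = (\<integral>\<^sup>+\<omega>. indicator (Zm \<inter> C) \<omega> \<partial>M)" by (simp add: indicator_inter_arith)
    also have "\<dots> = emeasure M (Zm \<inter> C)" by (rule nn_integral_indicator) simp
    also have "Zm \<inter> C = {\<omega>\<in>C. T \<omega> = m}" using sets.sets_into_space[OF CM] by (auto simp: Zm_def)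
    also have "emeasure M {\<omega>\<in>C. T \<omega> = m} = (\<integral>\<^sup>+\<omega>. ennreal (r t m \<omega>) * indicator C \<omega> \<partial>M)"
      using S C unfolding Sprop_def by blast
    also have "\<dots> = emeasure \<mu>2 C"
      unfolding \<mu>2_def by (rule emeasure_restr_density[symmetric, OF _ C]) simp
    finally show "emeasure \<mu>1 C = emeasure \<mu>2 C" .
  qed
  have "(\<integral>\<^sup>+\<omega>. indicator Zm \<omega> * \<phi> \<omega> \<partial>M) = (\<integral>\<^sup>+\<omega>. \<phi> \<omega> \<partial>density M (indicator Zm))"
    by (rule nn_integral_density[symmetric]) (simp_all add: toM[OF phi])
  also have "\<dots> = (\<integral>\<^sup>+\<omega>. \<phi> \<omega> \<partial>\<mu>1)" unfolding \<mu>1_def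
    by (rule nn_integral_subalgebra2[symmetric, OF subalg_G_density phi])
  also have "\<dots> = (\<integral>\<^sup>+\<omega>. \<phi> \<omega> \<partial>\<mu>2)" by (simp add: \<open>\<mu>1 = \<mu>2\<close>)
  also have "\<dots> = (\<integral>\<^sup>+\<omega>. \<phi> \<omega> \<partial>density M (\<lambda>\<omega>. ennreal (r t m \<omega>)))" unfolding \<mu>2_def
    by (rule nn_integral_subalgebra2[OF subalg_G_density phi])
  also have "\<dots> = (\<integral>\<^sup>+\<omega>. ennreal (r t m \<omega>) * \<phi> \<omega> \<partial>M)"
    by (rule nn_integral_density) (simp_all add: toM[OF phi])
  finally show ?thesis unfolding Zm_def .
qed

lemma sum_T: "\<omega> \<in> space M \<Longrightarrow> (\<Sum>m. indicator {\<omega>\<in>space M. T \<omega> = m} \<omega> * f m) = (f (T \<omega>) :: ennreal)"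
proof -
  assume "\<omega> \<in> space M"
  have "disjoint_family (\<lambda>m. {\<omega>\<in>space M. T \<omega> = m})" unfolding disjoint_family_on_def by auto
  from suminf_cmult_indicator[OF this, of \<omega> "T \<omega>" f] \<open>\<omega> \<in> space M\<close>
  show ?thesis by (simp add: mult.commute)
qed

lemma CL:
  assumes S: "Sprop t" and H[measurable]: "H \<in> borel_measurable (G t \<Otimes>\<^sub>M N)"
  shows "(\<integral>\<^sup>+\<omega>. H (\<omega>, x (Suc t) \<omega>) \<partial>M) = (\<integral>\<^sup>+\<omega>. \<integral>\<^sup>+y. ennreal (rho t \<omega> y) * H (\<omega>, y) \<partial>N \<partial>M)"
proof -
  let ?Z = "\<lambda>m. {\<omega>\<in>space M. T \<omega> = m}"
  let ?phi = "\<lambda>m \<omega>. \<integral>\<^sup>+y. ennreal (dens m (Suc t) y) * H (\<omega>, y) \<partial>N"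
  have phiG: "?phi m \<in> borel_measurable (G t)" for m by (rule int_meas[OF H dens_m dens_fin])
  have mp: "(\<lambda>\<omega>. (\<omega>, x (Suc t) \<omega>)) \<in> measurable M (G t \<Otimes>\<^sub>M N)" by (rule measurable_Pair[OF id_G x_m])
  have Hx[measurable]: "(\<lambda>\<omega>. H (\<omega>, x (Suc t) \<omega>)) \<in> borel_measurable M"
    using measurable_comp[OF mp H] by (simp add: comp_def)
  have Zm[measurable]: "\<And>m. ?Z m \<in> sets M" by measurable
  have phiM[measurable]: "\<And>m. ?phi m \<in> borel_measurable M" by (rule toM[OF phiG])
  have rM[measurable]: "\<And>m. r t m \<in> borel_measurable M" by (rule toM[OF r_G])
  have "(\<integral>\<^sup>+\<omega>. H (\<omega>, x (Suc t) \<omega>) \<partial>M) = (\<integral>\<^sup>+\<omega>. (\<Sum>m. indicator (?Z m) \<omega> * H (\<omega>, x (Suc t) \<omega>)) \<partial>M)"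
    by (intro nn_integral_cong) (rule sum_T[symmetric])
  also have "\<dots> = (\<Sum>m. \<integral>\<^sup>+\<omega>. indicator (?Z m) \<omega> * H (\<omega>, x (Suc t) \<omega>) \<partial>M)"
    by (rule nn_integral_suminf) measurable
  also have "\<dots> = (\<Sum>m. \<integral>\<^sup>+\<omega>. indicator (?Z m) \<omega> * ?phi m \<omega> \<partial>M)"
    by (intro suminf_cong pairf H)
  also have "\<dots> = (\<Sum>m. \<integral>\<^sup>+\<omega>. ennreal (r t m \<omega>) * ?phi m \<omega> \<partial>M)"
    by (intro suminf_cong S_fun[OF S phiG])
  also have "\<dots> = (\<integral>\<^sup>+\<omega>. (\<Sum>m. ennreal (r t m \<omega>) * ?phi m \<omega>) \<partial>M)"
    by (rule nn_integral_suminf[symmetric]) measurable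
  also have "\<dots> = (\<integral>\<^sup>+\<omega>. \<integral>\<^sup>+y. ennreal (rho t \<omega> y) * H (\<omega>, y) \<partial>N \<partial>M)"
  proof (intro nn_integral_cong)
    fix \<omega> assume "\<omega> \<in> space M"
    then have "\<omega> \<in> space (G t)" by simp
    then have Hy[measurable]: "(\<lambda>y. H (\<omega>, y)) \<in> borel_measurable N" by (rule measurable_Pair2[OF H])
    have "(\<Sum>m. ennreal (r t m \<omega>) * ?phi m \<omega>) = (\<Sum>m. \<integral>\<^sup>+y. ennreal (r t m \<omega> * dens m (Suc t) y) * H (\<omega>, y) \<partial>N)"
      by (intro suminf_cong) (simp add: nn_integral_cmult[symmetric] Hy ennreal_mult r_nn dens_nn mult.assoc)
    also have "\<dots> = (\<integral>\<^sup>+y. (\<Sum>m. ennreal (r t m \<omega> * dens m (Suc t) y) * H (\<omega>, y)) \<partial>N)"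
      by (rule nn_integral_suminf[symmetric]) measurable
    also have "\<dots> = (\<integral>\<^sup>+y. ennreal (rho t \<omega> y) * H (\<omega>, y) \<partial>N)"
    proof (intro nn_integral_cong)
      fix y
      have "(\<Sum>m. ennreal (r t m \<omega> * dens m (Suc t) y)) = ennreal (rho t \<omega> y)"
        by (rule suminf_ennreal_eq[OF _ rho_sums]) (simp add: r_nn dens_nn)
      then show "(\<Sum>m. ennreal (r t m \<omega> * dens m (Suc t) y) * H (\<omega>, y)) = ennreal (rho t \<omega> y) * H (\<omega>, y)"
        by (simp add: ennreal_suminf_multc)
    qed
    finally show "(\<Sum>m. ennreal (r t m \<omega>) * ?phi m \<omega>) = (\<integral>\<^sup>+y. ennreal (rho t \<omega> y) * H (\<omega>, y) \<partial>N)" .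
  qed
  finally show ?thesis .
qed


lemma S0: "Sprop 0"
  unfolding Sprop_def
proof (intro allI impI)
  fix m C assume "C \<in> sets (G 0)"
  moreover have "Gen 0 = {}" unfolding Gen_def by auto
  ultimately have C: "C = {} \<or> C = space M" by (simp add: sets_G sigma_sets_empty_eq)
  have r0: "r 0 m \<omega> = \<theta> * (1 - \<theta>) ^ m" for \<omega>
    by (simp add: r_def ell_def Lam_def aa_def bb_def Pp_def)
  show "emeasure M {\<omega>\<in>C. T \<omega> = m} = (\<integral>\<^sup>+\<omega>. ennreal (r 0 m \<omega>) * indicator C \<omega> \<partial>M)"
    using C
  proof
    assume "C = {}" then show ?thesis by simp
  next
    assume Cs: "C = space M"
    have "emeasure M {\<omega>\<in>space M. T \<omega> = m \<and> (\<forall>s\<in>{1..0}. x s \<omega> \<in> space N)} =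
       ennreal (\<theta> * (1 - \<theta>) ^ m) * (\<Prod>s\<in>{1..0::nat}. \<integral>\<^sup>+ y \<in> space N. ennreal (dens m s y) \<partial>N)"
      by (rule fact1) simp
    then have "emeasure M {\<omega>\<in>C. T \<omega> = m} = ennreal (\<theta> * (1 - \<theta>) ^ m)" using Cs by simp
    also have "\<dots> = (\<integral>\<^sup>+\<omega>. ennreal (r 0 m \<omega>) * indicator C \<omega> \<partial>M)"
      using Cs by (simp add: r0 nn_integral_cmult_indicator emeasure_space_1)
    finally show ?thesis .
  qed
qed

definition Rect :: "nat \<Rightarrow> 'a set set" where
  "Rect t = (\<lambda>(C, A). C \<inter> (x (Suc t) -` A \<inter> space M)) ` (sets (G t) \<times> sets N)"

lemma RectI: "C \<in> sets (G t) \<Longrightarrow> A \<in> sets N \<Longrightarrow> C \<inter> (x (Suc t) -` A \<inter> space M) \<in> Rect t"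
  unfolding Rect_def by (rule image_eqI[where x="(C, A)"]) auto

lemma RectE: "R \<in> Rect t \<Longrightarrow> \<exists>C A. C \<in> sets (G t) \<and> A \<in> sets N \<and> R = C \<inter> (x (Suc t) -` A \<inter> space M)"
  unfolding Rect_def by auto

lemma Rect_Pow: "Rect t \<subseteq> Pow (space M)" unfolding Rect_def by auto

lemma Rect_Int: "Int_stable (Rect t)"
proof (rule Int_stableI)
  fix a b assume a: "a \<in> Rect t" and b: "b \<in> Rect t"
  obtain C1 A1 where 1: "C1 \<in> sets (G t)" "A1 \<in> sets N" "a = C1 \<inter> (x (Suc t) -` A1 \<inter> space M)"
    using RectE[OF a] by blast
  obtain C2 A2 where 2: "C2 \<in> sets (G t)" "A2 \<in> sets N" "b = C2 \<inter> (x (Suc t) -` A2 \<inter> space M)"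
    using RectE[OF b] by blast
  have "a \<inter> b = (C1 \<inter> C2) \<inter> (x (Suc t) -` (A1 \<inter> A2) \<inter> space M)" using 1 2 by auto
  moreover have "\<dots> \<in> Rect t" using 1 2 by (intro RectI) auto
  ultimately show "a \<inter> b \<in> Rect t" by simp
qed

lemma space_Rect: "space M \<in> Rect t"
proof -
  have "space M = space M \<inter> (x (Suc t) -` space N \<inter> space M)" by (auto simp: x_space)
  moreover have "\<dots> \<in> Rect t" by (intro RectI) (auto simp: sets.top[of "G t", simplified])
  ultimately show ?thesis by simp
qed

lemma Rect_gen: "sets (G (Suc t)) = sigma_sets (space M) (Rect t)"
  unfolding sets_G
proof (rule sigma_sets_eqI)
  interpret S: sigma_algebra "space M" "sigma_sets (space M) (Rect t)"
    using Rect_Pow by (rule sigma_algebra_sigma_sets)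
  fix b assume "b \<in> Gen (Suc t)"
  then obtain s A where s: "s \<in> {1..Suc t}" "A \<in> sets N" "b = x s -` A \<inter> space M"
    unfolding Gen_def by blast
  show "b \<in> sigma_sets (space M) (Rect t)"
  proof (cases "s = Suc t")
    case True
    have "b = space M \<inter> (x (Suc t) -` A \<inter> space M)" using s True by auto
    moreover have "\<dots> \<in> Rect t" using s by (intro RectI) (auto simp: sets.top[of "G t", simplified])
    ultimately show ?thesis by auto
  next
    case False
    then have s': "s \<in> {1..t}" using s by auto
    have "b = b \<inter> (x (Suc t) -` space N \<inter> space M)" using s by (auto simp: x_space)
    moreover have "b \<in> sets (G t)" using s s' Gen_sub by simp
    moreover have "b \<inter> (x (Suc t) -` space N \<inter> space M) \<in> Rect t" using calculation(2) by (intro RectI) auto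
    ultimately show ?thesis by auto
  qed
next
  interpret S: sigma_algebra "space M" "sigma_sets (space M) (Gen (Suc t))"
    using Gen_Pow by (rule sigma_algebra_sigma_sets)
  fix a assume "a \<in> Rect t"
  then obtain C A where 1: "C \<in> sets (G t)" "A \<in> sets N" "a = C \<inter> (x (Suc t) -` A \<inter> space M)"
    using RectE by blast
  have "C \<in> sigma_sets (space M) (Gen (Suc t))" using 1 G_mono[of t "Suc t"] by (auto simp: sets_G)
  moreover have "x (Suc t) -` A \<inter> space M \<in> sigma_sets (space M) (Gen (Suc t))"
    using 1 by (intro sigma_sets.Basic Gen_mem) auto
  ultimately show "a \<in> sigma_sets (space M) (Gen (Suc t))" using 1 S.Int by auto
qed


lemma emeasure_restr_Zm:
  assumes D: "D \<in> sets (G t)"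
  shows "emeasure (restr_to_subalg (density M (indicator {\<omega>\<in>space M. T \<omega> = m})) (G t)) D = emeasure M {\<omega>\<in>D. T \<omega> = m}"
proof -
  define Zm where "Zm = {\<omega>\<in>space M. T \<omega> = m}"
  have Zm[measurable]: "Zm \<in> sets M" unfolding Zm_def by measurable
  have DM[measurable]: "D \<in> sets M" using D sets_G_M by auto
  have "emeasure (restr_to_subalg (density M (indicator Zm)) (G t)) D = (\<integral>\<^sup>+\<omega>. indicator Zm \<omega> * indicator D \<omega> \<partial>M)"
    by (rule emeasure_restr_density[OF _ D]) simp
  also have "\<dots> = (\<integral>\<^sup>+\<omega>. indicator (Zm \<inter> D) \<omega> \<partial>M)" by (simp add: indicator_inter_arith)
  also have "\<dots> = emeasure M (Zm \<inter> D)" by (rule nn_integral_indicator) simp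
  also have "Zm \<inter> D = {\<omega>\<in>D. T \<omega> = m}" using sets.sets_into_space[OF DM] by (auto simp: Zm_def)
  finally show ?thesis unfolding Zm_def .
qed

lemma S_step:
  assumes S: "Sprop t"
  shows "Sprop (Suc t)"
  unfolding Sprop_def
proof (intro allI impI)
  fix m C0 assume C0: "C0 \<in> sets (G (Suc t))"
  define Zm where "Zm = {\<omega>\<in>space M. T \<omega> = m}"
  have Zm[measurable]: "Zm \<in> sets M" unfolding Zm_def by measurable
  have rM[measurable]: "r (Suc t) m \<in> borel_measurable M" by (rule toM) measurable
  define \<mu>1 where "\<mu>1 = restr_to_subalg (density M (indicator Zm)) (G (Suc t))"
  define \<mu>2 where "\<mu>2 = restr_to_subalg (density M (\<lambda>\<omega>. ennreal (r (Suc t) m \<omega>))) (G (Suc t))"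
  have e1: "emeasure \<mu>1 D = emeasure M {\<omega>\<in>D. T \<omega> = m}" if "D \<in> sets (G (Suc t))" for D
    unfolding \<mu>1_def Zm_def by (rule emeasure_restr_Zm[OF that])
  have e2: "emeasure \<mu>2 D = (\<integral>\<^sup>+\<omega>. ennreal (r (Suc t) m \<omega>) * indicator D \<omega> \<partial>M)" if "D \<in> sets (G (Suc t))" for D
    unfolding \<mu>2_def by (rule emeasure_restr_density[OF _ that]) simp
  have "\<mu>1 = \<mu>2"
  proof (rule measure_eqI_generator_eq[OF Rect_Int Rect_Pow])
    show "sets \<mu>1 = sigma_sets (space M) (Rect t)" unfolding \<mu>1_def
      by (simp add: sets_restr_to_subalg[OF subalg_G_density] Rect_gen)
    show "sets \<mu>2 = sigma_sets (space M) (Rect t)" unfolding \<mu>2_def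
      by (simp add: sets_restr_to_subalg[OF subalg_G_density] Rect_gen)
    show "range (\<lambda>i. space M) \<subseteq> Rect t" using space_Rect by auto
    show "(\<Union>i. space M) = space M" by simp
    show "emeasure \<mu>1 (space M) \<noteq> \<infinity>" for i :: nat
      using e1[OF sets.top[of "G (Suc t)", simplified]] by (simp add: emeasure_eq_measure)
  next
    fix R assume R: "R \<in> Rect t"
    then obtain C A where hC[measurable]: "C \<in> sets (G t)" and hA[measurable]: "A \<in> sets N"
      and R_eq: "R = C \<inter> (x (Suc t) -` A \<inter> space M)"
      using RectE by blast
    have RG: "R \<in> sets (G (Suc t))" using R Rect_gen by auto
    have CM[measurable]: "C \<in> sets M" by (rule subsetD[OF sets_G_M hC])
    have CS: "C \<subseteq> space M" using sets.sets_into_space[OF CM] .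
    have "emeasure \<mu>1 R = emeasure M {\<omega>\<in>R. T \<omega> = m}" by (rule e1[OF RG])
    also have "\<dots> = emeasure M {\<omega>\<in>C. x (Suc t) \<omega> \<in> A \<and> T \<omega> = m}"
      unfolding R_eq using CS by (intro arg_cong[where f="emeasure M"]) auto
    also have "\<dots> = emeasure M {\<omega>\<in>C. T \<omega> = m} * Dm m (Suc t) A" by (rule onestep[OF hC hA])
    also have "\<dots> = (\<integral>\<^sup>+\<omega>. ennreal (r t m \<omega>) * indicator C \<omega> \<partial>M) * Dm m (Suc t) A"
      using S hC unfolding Sprop_def by simp
    finally have L: "emeasure \<mu>1 R = (\<integral>\<^sup>+\<omega>. ennreal (r t m \<omega>) * indicator C \<omega> \<partial>M) * Dm m (Suc t) A" .
    define H where "H z = ennreal (r t m (fst z)) * indicator C (fst z) * (indicator A (snd z) *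
        ennreal (dens m (Suc t) (snd z) / rho t (fst z) (snd z)))" for z
    have Hm[measurable]: "H \<in> borel_measurable (G t \<Otimes>\<^sub>M N)"
      unfolding H_def rho_def by measurable
    have "emeasure \<mu>2 R = (\<integral>\<^sup>+\<omega>. ennreal (r (Suc t) m \<omega>) * indicator R \<omega> \<partial>M)" by (rule e2[OF RG])
    also have "\<dots> = (\<integral>\<^sup>+\<omega>. H (\<omega>, x (Suc t) \<omega>) \<partial>M)"
    proof (intro nn_integral_cong)
      fix \<omega> assume "\<omega> \<in> space M"
      then have "indicator R \<omega> = (indicator C \<omega> * indicator A (x (Suc t) \<omega>) :: ennreal)"
        unfolding R_eq by (simp add: indicator_def)
      then show "ennreal (r (Suc t) m \<omega>) * indicator R \<omega> = H (\<omega>, x (Suc t) \<omega>)"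
      proof -
        have e: "ennreal (r t m \<omega> * (dens m (Suc t) (x (Suc t) \<omega>) / rho t \<omega> (x (Suc t) \<omega>))) =
            ennreal (r t m \<omega>) * ennreal (dens m (Suc t) (x (Suc t) \<omega>) / rho t \<omega> (x (Suc t) \<omega>))"
          using r_nn[of t m \<omega>] dens_nn rho_nn by (intro ennreal_mult) auto
        show ?thesis unfolding H_def r_Suc e using \<open>indicator R \<omega> = _\<close> by (simp add: mult_ac)
      qed
    qed
    also have "\<dots> = (\<integral>\<^sup>+\<omega>. \<integral>\<^sup>+y. ennreal (rho t \<omega> y) * H (\<omega>, y) \<partial>N \<partial>M)" by (rule CL[OF S Hm])
    also have "\<dots> = (\<integral>\<^sup>+\<omega>. ennreal (r t m \<omega>) * indicator C \<omega> * Dm m (Suc t) A \<partial>M)"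
    proof (intro nn_integral_cong)
      fix \<omega> assume "\<omega> \<in> space M"
      show "(\<integral>\<^sup>+y. ennreal (rho t \<omega> y) * H (\<omega>, y) \<partial>N) = ennreal (r t m \<omega>) * indicator C \<omega> * Dm m (Suc t) A"
      proof (cases "Lam t \<omega> > 0")
        case True
        have "(\<integral>\<^sup>+y. ennreal (rho t \<omega> y) * H (\<omega>, y) \<partial>N) =
            (\<integral>\<^sup>+y. ennreal (r t m \<omega>) * indicator C \<omega> * (ennreal (dens m (Suc t) y) * indicator A y) \<partial>N)"
        proof (intro nn_integral_cong)
          fix y
          have "ennreal (rho t \<omega> y) * ennreal (dens m (Suc t) y / rho t \<omega> y) = ennreal (dens m (Suc t) y)"
            using rho_dens[OF True, where m=m and s="Suc t" and y=y] rho_nn[of t \<omega> y] dens_nn[of m "Suc t" y]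
            by (simp add: ennreal_mult[symmetric])
          then show "ennreal (rho t \<omega> y) * H (\<omega>, y) = ennreal (r t m \<omega>) * indicator C \<omega> * (ennreal (dens m (Suc t) y) * indicator A y)"
            unfolding H_def by (simp add: mult_ac)
        qed
        also have "\<dots> = ennreal (r t m \<omega>) * indicator C \<omega> * Dm m (Suc t) A"
          unfolding Dm_def by (rule nn_integral_cmult) simp
        finally show ?thesis .
      next
        case False
        then have "Lam t \<omega> = 0" using Lam_nn[of t \<omega>] by simp
        then have "r t m \<omega> = 0" by (simp add: r_def)
        then show ?thesis by (simp add: H_def)
      qed
    qed
    also have "\<dots> = (\<integral>\<^sup>+\<omega>. ennreal (r t m \<omega>) * indicator C \<omega> \<partial>M) * Dm m (Suc t) A"
    proof -
      have [measurable]: "r t m \<in> borel_measurable M" by (rule toM) measurable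
      show ?thesis by (rule nn_integral_multc) measurable
    qed
    finally show "emeasure \<mu>1 R = emeasure \<mu>2 R" using L by simp
  qed
  have "emeasure M {\<omega>\<in>C0. T \<omega> = m} = emeasure \<mu>1 C0" by (rule e1[symmetric, OF C0])
  also have "\<dots> = emeasure \<mu>2 C0" by (simp add: \<open>\<mu>1 = \<mu>2\<close>)
  also have "\<dots> = (\<integral>\<^sup>+\<omega>. ennreal (r (Suc t) m \<omega>) * indicator C0 \<omega> \<partial>M)" by (rule e2[OF C0])
  finally show "emeasure M {\<omega>\<in>C0. T \<omega> = m} = (\<integral>\<^sup>+\<omega>. ennreal (r (Suc t) m \<omega>) * indicator C0 \<omega> \<partial>M)" .
qed

lemma S_all: "Sprop t"
  by (induction t) (auto intro: S0 S_step)

end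


context chg
begin

lemma Lam_pos_AE: "AE \<omega> in M. Lam t \<omega> > 0"
proof -
  define C where "C = {\<omega>\<in>space M. Lam t \<omega> = 0}"
  have "C = Lam t -` {0} \<inter> space (G t)" by (auto simp: C_def)
  also have "\<dots> \<in> sets (G t)" by (rule measurable_sets[OF Lam_G]) simp
  finally have CG: "C \<in> sets (G t)" .
  have CM[measurable]: "C \<in> sets M" by (rule subsetD[OF sets_G_M CG])
  have z: "emeasure M {\<omega>\<in>C. T \<omega> = m} = 0" for m
  proof -
    have "emeasure M {\<omega>\<in>C. T \<omega> = m} = (\<integral>\<^sup>+\<omega>. ennreal (r t m \<omega>) * indicator C \<omega> \<partial>M)"
      using S_all[of t] CG unfolding Sprop_def by blast
    also have "\<dots> = (\<integral>\<^sup>+\<omega>. 0 \<partial>M)"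
      by (intro nn_integral_cong) (auto simp: C_def r_def indicator_def)
    finally show ?thesis by simp
  qed
  have CU: "C = (\<Union>m. {\<omega>\<in>C. T \<omega> = m})" by auto
  have rng: "range (\<lambda>m. {\<omega>\<in>C. T \<omega> = m}) \<subseteq> sets M" by auto
  have dj: "disjoint_family (\<lambda>m. {\<omega>\<in>C. T \<omega> = m})" unfolding disjoint_family_on_def by auto
  have "emeasure M C = (\<Sum>m. emeasure M {\<omega>\<in>C. T \<omega> = m})"
    using suminf_emeasure[OF rng dj] CU by simp
  also have "\<dots> = 0" by (simp add: z)
  finally have "C \<in> null_sets M" by auto
  then show ?thesis
    by (rule AE_I') (use Lam_nn in \<open>auto simp: C_def less_le\<close>)
qed

lemma pii_le1: "pii t \<omega> \<le> 1"
  unfolding pii_def Lam_def using aa_nn[of t \<omega>] bb_nn[of t \<omega>]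
  by (cases "aa t \<omega> + bb t \<omega> = 0") (auto simp: divide_le_eq_1)

definition V :: "nat \<Rightarrow> 'a \<Rightarrow> real" where "V t = posterior M N (tau 1) (X 1) t"

lemma x_eq: "X 1 = x" by (rule ext) (simp add: x_def)

lemma V_eq: "V t = real_cond_exp M (G t) (\<lambda>\<omega>. if T \<omega> < t then 1 else 0)"
  unfolding V_def posterior_def G_def x_eq T_def ..

lemma V_G[measurable]: "V t \<in> borel_measurable (G t)"
proof -
  interpret sigma_finite_subalgebra M "G t" by (rule sfs_G)
  show ?thesis unfolding V_eq by (rule borel_measurable_cond_exp)
qed

lemma V_pii: "AE \<omega> in M. V t \<omega> = pii t \<omega>"
proof -
  interpret sigma_finite_subalgebra M "G t" by (rule sfs_G)
  define f where "f \<omega> = (if T \<omega> < t then 1 else 0 :: real)" for \<omega>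
  have fM[measurable]: "f \<in> borel_measurable M" unfolding f_def by measurable
  have piiM[measurable]: "pii t \<in> borel_measurable M" by (rule toM) measurable
  have intf: "integrable M f"
    by (rule integrable_const_bound[where B=1]) (auto simp: f_def)
  have intp: "integrable M (pii t)"
    by (rule integrable_const_bound[where B=1]) (auto simp: pii_nn pii_le1)
  have "AE \<omega> in M. real_cond_exp M (G t) f \<omega> = pii t \<omega>"
  proof (rule real_cond_exp_charact)
    fix A assume A: "A \<in> sets (G t)"
    have AM[measurable]: "A \<in> sets M" by (rule subsetD[OF sets_G_M A])
    have "(\<integral>\<^sup>+\<omega>. ennreal (indicator A \<omega> *\<^sub>R f \<omega>) \<partial>M) =
        (\<integral>\<^sup>+\<omega>. (\<Sum>m<t. indicator {\<omega>\<in>space M. T \<omega> = m} \<omega> * indicator A \<omega>) \<partial>M)"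
    proof (intro nn_integral_cong)
      fix \<omega> assume "\<omega> \<in> space M"
      then show "ennreal (indicator A \<omega> *\<^sub>R f \<omega>) = (\<Sum>m<t. indicator {\<omega>\<in>space M. T \<omega> = m} \<omega> * indicator A \<omega>)"
        by (simp add: f_def indicator_def sum.delta')
    qed
    also have "\<dots> = (\<Sum>m<t. \<integral>\<^sup>+\<omega>. indicator {\<omega>\<in>space M. T \<omega> = m} \<omega> * indicator A \<omega> \<partial>M)"
      by (rule nn_integral_sum) measurable
    also have "\<dots> = (\<Sum>m<t. \<integral>\<^sup>+\<omega>. ennreal (r t m \<omega>) * indicator A \<omega> \<partial>M)"
      by (intro sum.cong refl S_fun[OF S_all] borel_measurable_indicator A)
    also have "\<dots> = (\<integral>\<^sup>+\<omega>. (\<Sum>m<t. ennreal (r t m \<omega>) * indicator A \<omega>) \<partial>M)"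
    proof -
      have [measurable]: "\<And>m. r t m \<in> borel_measurable M" by (rule toM) measurable
      show ?thesis by (rule nn_integral_sum[symmetric]) measurable
    qed
    also have "\<dots> = (\<integral>\<^sup>+\<omega>. ennreal (indicator A \<omega> *\<^sub>R pii t \<omega>) \<partial>M)"
    proof (intro nn_integral_cong)
      fix \<omega>
      have "(\<Sum>m<t. ennreal (r t m \<omega>)) = ennreal (pii t \<omega>)"
        unfolding pii_sum by (rule sum_ennreal) (simp add: r_nn)
      then show "(\<Sum>m<t. ennreal (r t m \<omega>) * indicator A \<omega>) = ennreal (indicator A \<omega> *\<^sub>R pii t \<omega>)"
        by (simp add: sum_distrib_right[symmetric] indicator_def)
    qed
    finally have eq: "(\<integral>\<^sup>+\<omega>. ennreal (indicator A \<omega> *\<^sub>R f \<omega>) \<partial>M) = (\<integral>\<^sup>+\<omega>. ennreal (indicator A \<omega> *\<^sub>R pii t \<omega>) \<partial>M)" .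
    have "(\<integral>\<omega>\<in>A. f \<omega> \<partial>M) = enn2real (\<integral>\<^sup>+\<omega>. ennreal (indicator A \<omega> *\<^sub>R f \<omega>) \<partial>M)"
      unfolding set_lebesgue_integral_def by (rule integral_eq_nn_integral) (auto simp: f_def)
    also have "\<dots> = enn2real (\<integral>\<^sup>+\<omega>. ennreal (indicator A \<omega> *\<^sub>R pii t \<omega>) \<partial>M)" by (simp only: eq)
    also have "\<dots> = (\<integral>\<omega>\<in>A. pii t \<omega> \<partial>M)"
      unfolding set_lebesgue_integral_def by (rule integral_eq_nn_integral[symmetric]) (auto simp: pii_nn)
    finally show "(\<integral>\<omega>\<in>A. f \<omega> \<partial>M) = (\<integral>\<omega>\<in>A. pii t \<omega> \<partial>M)" .
  qed (simp_all add: intf intp)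
  then show ?thesis unfolding V_eq f_def .
qed

lemma V_01: "AE \<omega> in M. V t \<omega> \<in> {0..1}"
  using V_pii[of t] by eventually_elim (simp add: pii_nn pii_le1)

end


context chg
begin

definition cl :: "real \<Rightarrow> real" where "cl z = max 0 (min 1 z)"
definition W :: "real \<Rightarrow> real" where "W z = cl z + \<theta> * (1 - cl z)"
definition dK :: "real \<Rightarrow> 'b \<Rightarrow> real" where "dK z y = W z * q y + (1 - W z) * p y"
definition fK :: "real \<Rightarrow> 'b \<Rightarrow> real" where "fK z y = W z * q y / dK z y"
definition Ker :: "real \<Rightarrow> real measure" where
  "Ker z = distr (density N (\<lambda>y. ennreal (dK z y))) borel (fK z)"

lemma cl01: "0 \<le> cl z" "cl z \<le> 1" unfolding cl_def by auto
lemma cl_id: "0 \<le> z \<Longrightarrow> z \<le> 1 \<Longrightarrow> cl z = z" unfolding cl_def by auto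
lemma W01: "\<theta> \<le> W z" "W z \<le> 1" "0 \<le> W z" "0 \<le> 1 - W z"
proof -
  have e1: "W z - \<theta> = cl z * (1 - \<theta>)" by (simp add: W_def algebra_simps)
  have e2: "1 - W z = (1 - cl z) * (1 - \<theta>)" by (simp add: W_def algebra_simps)
  have "cl z * (1 - \<theta>) \<ge> 0" using cl01[of z] th1 by simp
  then have a: "W z - \<theta> \<ge> 0" unfolding e1 .
  have "(1 - cl z) * (1 - \<theta>) \<ge> 0" using cl01[of z] th1 by simp
  then have b: "1 - W z \<ge> 0" unfolding e2 .
  show "\<theta> \<le> W z" "W z \<le> 1" "0 \<le> W z" "0 \<le> 1 - W z" using a b th0 by linarith+
qed

lemma W_mono: "z \<le> z' \<Longrightarrow> W z \<le> W z'"
proof -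
  assume "z \<le> z'"
  then have "cl z \<le> cl z'" unfolding cl_def by auto
  moreover have "W z' - W z = (cl z' - cl z) * (1 - \<theta>)" by (simp add: W_def algebra_simps)
  ultimately show ?thesis using th1 by (smt (verit) mult_nonneg_nonneg)
qed

lemma cl_m[measurable]: "cl \<in> borel_measurable borel" unfolding cl_def[abs_def] by measurable
lemma W_m[measurable]: "W \<in> borel_measurable borel" unfolding W_def[abs_def] by measurable

lemma dK_nn: "0 \<le> dK z y" unfolding dK_def using W01[of z] p0[of y] q0[of y] by (simp add: add_nonneg_nonneg)

lemma fK01: "0 \<le> fK z y" "fK z y \<le> 1"
proof -
  have a: "0 \<le> W z * q y" using W01[of z] q0[of y] by simp
  have b: "0 \<le> (1 - W z) * p y" using W01[of z] p0[of y] by simp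
  show "0 \<le> fK z y" unfolding fK_def using a dK_nn by simp
  show "fK z y \<le> 1" unfolding fK_def dK_def using a b
    by (cases "W z * q y + (1 - W z) * p y = 0") (auto simp: divide_le_eq_1)
qed

lemma dK_GN[measurable]: "(\<lambda>z. dK (fst z) (snd z)) \<in> borel_measurable (borel \<Otimes>\<^sub>M N)"
  unfolding dK_def by measurable
lemma fK_GN[measurable]: "(\<lambda>z. fK (fst z) (snd z)) \<in> borel_measurable (borel \<Otimes>\<^sub>M N)"
  unfolding fK_def dK_def by measurable
lemma dK_m[measurable]: "dK z \<in> borel_measurable N"
  unfolding dK_def by measurable
lemma fK_m[measurable]: "fK z \<in> borel_measurable N"
  unfolding fK_def dK_def by measurable

lemma int_dK: "(\<integral>\<^sup>+y. ennreal (dK z y) \<partial>N) = 1"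
proof -
  have "(\<integral>\<^sup>+y. ennreal (dK z y) \<partial>N) = (\<integral>\<^sup>+y. ennreal (W z) * ennreal (q y) + ennreal (1 - W z) * ennreal (p y) \<partial>N)"
    using W01[of z] p0 q0 by (intro nn_integral_cong) (simp add: dK_def ennreal_mult)
  also have "\<dots> = ennreal (W z) * (\<integral>\<^sup>+y. ennreal (q y) \<partial>N) + ennreal (1 - W z) * (\<integral>\<^sup>+y. ennreal (p y) \<partial>N)"
    by (simp add: nn_integral_add nn_integral_cmult)
  also have "\<dots> = ennreal (W z) + ennreal (1 - W z)" by (simp add: pint qint)
  also have "\<dots> = 1" using W01[of z] by (subst ennreal_plus[symmetric]) auto
  finally show ?thesis .
qed

lemma prob_dens: "prob_space (density N (\<lambda>y. ennreal (dK z y)))"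
proof
  have "emeasure (density N (\<lambda>y. ennreal (dK z y))) (space N) = (\<integral>\<^sup>+y. ennreal (dK z y) * indicator (space N) y \<partial>N)"
    by (rule emeasure_density) simp_all
  also have "\<dots> = (\<integral>\<^sup>+y. ennreal (dK z y) \<partial>N)" by (intro nn_integral_cong) simp
  also have "\<dots> = 1" by (rule int_dK)
  finally show "emeasure (density N (\<lambda>y. ennreal (dK z y))) (space (density N (\<lambda>y. ennreal (dK z y)))) = 1" by simp
qed

lemma prob_Ker: "prob_space (Ker z)"
  unfolding Ker_def by (rule prob_space.prob_space_distr[OF prob_dens]) simp

lemma sets_Ker[simp]: "sets (Ker z) = sets borel" unfolding Ker_def by simp

lemma emeasure_Ker:
  assumes B: "B \<in> sets borel"
  shows "emeasure (Ker z) B = (\<integral>\<^sup>+y. ennreal (dK z y) * indicator B (fK z y) \<partial>N)"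
proof -
  have fm: "fK z \<in> measurable (density N (\<lambda>y. ennreal (dK z y))) borel" by simp
  have pre[measurable]: "fK z -` B \<inter> space N \<in> sets N" using measurable_sets[OF fK_m B] .
  have "emeasure (Ker z) B = emeasure (density N (\<lambda>y. ennreal (dK z y))) (fK z -` B \<inter> space N)"
    unfolding Ker_def by (subst emeasure_distr[OF fm B]) simp
  also have "\<dots> = (\<integral>\<^sup>+y. ennreal (dK z y) * indicator (fK z -` B \<inter> space N) y \<partial>N)"
    by (rule emeasure_density) simp_all
  also have "\<dots> = (\<integral>\<^sup>+y. ennreal (dK z y) * indicator B (fK z y) \<partial>N)"
    by (intro nn_integral_cong) (simp add: indicator_def)
  finally show ?thesis .
qed

lemma Ker01: "emeasure (Ker z) {0..1} = 1"
proof -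
  have "emeasure (Ker z) {0..1} = (\<integral>\<^sup>+y. ennreal (dK z y) \<partial>N)"
    unfolding emeasure_Ker[OF atLeastAtMost_borel] using fK01 by (intro nn_integral_cong) simp
  then show ?thesis by (simp add: int_dK)
qed

lemma Ker_meas: "Ker \<in> measurable borel (prob_algebra borel)"
proof (rule measurable_prob_algebraI)
  show "\<And>z. z \<in> space borel \<Longrightarrow> prob_space (Ker z)" by (rule prob_Ker)
  show "Ker \<in> borel \<rightarrow>\<^sub>M subprob_algebra borel"
  proof (rule measurable_subprob_algebra)
    show "\<And>z. z \<in> space borel \<Longrightarrow> subprob_space (Ker z)"
      using prob_Ker by (rule prob_space_imp_subprob_space)
    show "\<And>z. z \<in> space borel \<Longrightarrow> sets (Ker z) = sets borel" by simp
    fix B :: "real set" assume B: "B \<in> sets borel"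
    define H where "H zy = (indicator B (fK (fst zy) (snd zy)) :: ennreal)" for zy :: "real \<times> 'b"
    have Hm: "H \<in> borel_measurable (borel \<Otimes>\<^sub>M N)"
    proof -
      have [measurable]: "B \<in> sets borel" by (rule B)
      show ?thesis unfolding H_def by measurable
    qed
    have m1: "(\<lambda>z. \<integral>\<^sup>+y. ennreal (q y) * H (z, y) \<partial>N) \<in> borel_measurable borel"
      by (rule int_meas[OF Hm qm]) (simp add: qint)
    have m2: "(\<lambda>z. \<integral>\<^sup>+y. ennreal (p y) * H (z, y) \<partial>N) \<in> borel_measurable borel"
      by (rule int_meas[OF Hm pm]) (simp add: pint)
    have eq: "emeasure (Ker z) B = ennreal (W z) * (\<integral>\<^sup>+y. ennreal (q y) * H (z, y) \<partial>N) +
        ennreal (1 - W z) * (\<integral>\<^sup>+y. ennreal (p y) * H (z, y) \<partial>N)" for z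
    proof -
      have Hy: "(\<lambda>y. H (z, y)) \<in> borel_measurable N" by (rule measurable_Pair2[OF Hm]) simp
      have "emeasure (Ker z) B = (\<integral>\<^sup>+y. ennreal (W z) * (ennreal (q y) * H (z, y)) +
           ennreal (1 - W z) * (ennreal (p y) * H (z, y)) \<partial>N)"
        unfolding emeasure_Ker[OF B] H_def using W01[of z] p0 q0
        by (intro nn_integral_cong)
          (simp add: dK_def ennreal_mult distrib_right distrib_left mult_ac)
      also have "\<dots> = ennreal (W z) * (\<integral>\<^sup>+y. ennreal (q y) * H (z, y) \<partial>N) +
        ennreal (1 - W z) * (\<integral>\<^sup>+y. ennreal (p y) * H (z, y) \<partial>N)"
        using Hy by (simp add: nn_integral_add nn_integral_cmult)
      finally show ?thesis .
    qed
    show "(\<lambda>z. emeasure (Ker z) B) \<in> borel_measurable borel"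
      unfolding eq using m1 m2 by measurable
  qed
qed

end


context chg
begin

lemma ww_pii: "Lam t \<omega> > 0 \<Longrightarrow> ww t \<omega> = W (pii t \<omega>)"
proof -
  assume L: "Lam t \<omega> > 0"
  then have L0: "Lam t \<omega> \<noteq> 0" by simp
  have c: "cl (pii t \<omega>) = pii t \<omega>" by (rule cl_id[OF pii_nn pii_le1])
  have "W (pii t \<omega>) = pii t \<omega> + \<theta> * (1 - pii t \<omega>)" unfolding W_def c ..
  also have "\<dots> = (aa t \<omega> + \<theta> * (Lam t \<omega> - aa t \<omega>)) / Lam t \<omega>"
    unfolding pii_def using L0 by (simp add: field_simps)
  finally have "W (pii t \<omega>) = (aa t \<omega> + \<theta> * (Lam t \<omega> - aa t \<omega>)) / Lam t \<omega>" .
  then show ?thesis unfolding ww_def Lam_def by simp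
qed

lemma vv_pii: "Lam t \<omega> > 0 \<Longrightarrow> vv t \<omega> = 1 - W (pii t \<omega>)"
  using ww_vv[of t \<omega>] ww_pii[of t \<omega>] by simp

lemma rho_dK: "Lam t \<omega> > 0 \<Longrightarrow> rho t \<omega> y = dK (pii t \<omega>) y"
  unfolding rho_def dK_def using ww_pii vv_pii by simp

lemma pii_Suc_fK: "Lam t \<omega> > 0 \<Longrightarrow> pii (Suc t) \<omega> = fK (pii t \<omega>) (x (Suc t) \<omega>)"
proof -
  assume L: "Lam t \<omega> > 0"
  have "pii (Suc t) \<omega> = ((aa t \<omega> + \<theta> * bb t \<omega>) * q (x (Suc t) \<omega>)) / (Lam t \<omega> * rho t \<omega> (x (Suc t) \<omega>))"
    unfolding pii_def aa_Suc Lam_Suc ..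
  also have "\<dots> = ww t \<omega> * q (x (Suc t) \<omega>) / rho t \<omega> (x (Suc t) \<omega>)"
    unfolding ww_def by simp
  also have "\<dots> = fK (pii t \<omega>) (x (Suc t) \<omega>)"
    unfolding fK_def rho_dK[OF L] ww_pii[OF L] ..
  finally show ?thesis .
qed

definition P :: "nat \<Rightarrow> 'a measure" where "P t = proc_sigma M V t"
definition PGen :: "nat \<Rightarrow> 'a set set" where
  "PGen t = {V s -` B \<inter> space M | s B. s \<le> t \<and> B \<in> sets borel}"

lemma PGen_Pow: "PGen t \<subseteq> Pow (space M)" unfolding PGen_def by auto

lemma space_P[simp]: "space (P t) = space M"
  unfolding P_def proc_sigma_def PGen_def[symmetric] by (simp add: space_measure_of_conv)

lemma sets_P: "sets (P t) = sigma_sets (space M) (PGen t)"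
  unfolding P_def proc_sigma_def PGen_def[symmetric] using PGen_Pow by (simp add: sets_measure_of)

lemma PGen_G: "PGen t \<subseteq> sets (G t)"
proof
  fix a assume "a \<in> PGen t"
  then obtain s B where sB: "s \<le> t" "B \<in> sets borel" "a = V s -` B \<inter> space M"
    unfolding PGen_def by blast
  have "V s -` B \<inter> space (G s) \<in> sets (G s)" by (rule measurable_sets[OF V_G sB(2)])
  then show "a \<in> sets (G t)" using sB G_mono[OF sB(1)] by auto
qed

lemma sets_P_G: "sets (P t) \<subseteq> sets (G t)"
proof -
  have "sigma_sets (space (G t)) (PGen t) \<subseteq> sets (G t)"
    by (rule sets.sigma_sets_subset[OF PGen_G])
  then show ?thesis unfolding sets_P by simp
qed

lemma sfs_P: "sigma_finite_subalgebra M (P t)"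
proof -
  have "subalgebra M (P t)" unfolding subalgebra_def using sets_P_G sets_G_M by auto
  then have "finite_measure_subalgebra M (P t)"
    unfolding finite_measure_subalgebra_def finite_measure_subalgebra_axioms_def
    by (simp add: finite_measure_axioms)
  then show ?thesis by (rule finite_measure_subalgebra_is_sigma_finite)
qed

lemma V_P: "V t \<in> borel_measurable (P t)"
proof (rule measurableI)
  fix B :: "real set" assume "B \<in> sets borel"
  then have "V t -` B \<inter> space M \<in> PGen t" unfolding PGen_def by blast
  then show "V t -` B \<inter> space (P t) \<in> sets (P t)" unfolding sets_P by auto
qed simp

lemma markov:
  assumes B[measurable]: "B \<in> sets borel"
  shows "AE \<omega> in M. real_cond_exp M (P t) (\<lambda>\<omega>'. indicator B (V (Suc t) \<omega>')) \<omega> = measure (Ker (V t \<omega>)) B"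
proof -
  interpret sigma_finite_subalgebra M "P t" by (rule sfs_P)
  define f where "f \<omega> = (indicator B (V (Suc t) \<omega>) :: real)" for \<omega>
  define g where "g \<omega> = measure (Ker (V t \<omega>)) B" for \<omega>
  have VM[measurable]: "V s \<in> borel_measurable M" for s by (rule toM[OF V_G])
  have fM[measurable]: "f \<in> borel_measurable M" unfolding f_def by measurable
  have mK: "(\<lambda>z. measure (Ker z) B) \<in> borel_measurable borel"
    by (rule measurable_compose[OF Ker_meas measurable_measure_prob_algebra]) (rule B)
  have gP: "g \<in> borel_measurable (P t)" unfolding g_def
    by (rule measurable_compose[OF V_P mK])
  have gM[measurable]: "g \<in> borel_measurable M"
    by (rule measurable_from_subalg[OF subalg gP])
  have g01: "0 \<le> g \<omega>" "g \<omega> \<le> 1" for \<omega>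
    unfolding g_def using prob_space.prob_le_1[OF prob_Ker] by (auto simp: measure_nonneg)
  have intf: "integrable M f"
    by (rule integrable_const_bound[where B=1]) (auto simp: f_def)
  have intg: "integrable M g"
    by (rule integrable_const_bound[where B=1]) (use g01 in auto)
  have "AE \<omega> in M. real_cond_exp M (P t) f \<omega> = g \<omega>"
  proof (rule real_cond_exp_charact)
    fix A assume A: "A \<in> sets (P t)"
    have AG[measurable]: "A \<in> sets (G t)" using A sets_P_G by auto
    have AM[measurable]: "A \<in> sets M" by (rule subsetD[OF sets_G_M AG])
    define H where "H z = (indicator A (fst z) * indicator B (fK (V t (fst z)) (snd z)) :: ennreal)" for z
    have Hm: "H \<in> borel_measurable (G t \<Otimes>\<^sub>M N)"
    proof -
      have mp: "(\<lambda>z. (V t (fst z), snd z)) \<in> measurable (G t \<Otimes>\<^sub>M N) (borel \<Otimes>\<^sub>M N)"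
        by (rule measurable_Pair[OF measurable_compose[OF measurable_fst V_G] measurable_snd])
      have "(\<lambda>z. fK (V t (fst z)) (snd z)) \<in> borel_measurable (G t \<Otimes>\<^sub>M N)"
        using measurable_comp[OF mp fK_GN] by (simp add: comp_def)
      then have [measurable]: "(\<lambda>z. fK (V t (fst z)) (snd z)) \<in> borel_measurable (G t \<Otimes>\<^sub>M N)" .
      show ?thesis unfolding H_def by measurable
    qed
    have AE3: "AE \<omega> in M. Lam t \<omega> > 0 \<and> V t \<omega> = pii t \<omega> \<and> V (Suc t) \<omega> = pii (Suc t) \<omega>"
      using Lam_pos_AE[of t] V_pii[of t] V_pii[of "Suc t"] by eventually_elim auto
    have "(\<integral>\<^sup>+\<omega>. ennreal (indicator A \<omega> *\<^sub>R f \<omega>) \<partial>M) = (\<integral>\<^sup>+\<omega>. H (\<omega>, x (Suc t) \<omega>) \<partial>M)"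
    proof (rule nn_integral_cong_AE)
      show "AE \<omega> in M. ennreal (indicator A \<omega> *\<^sub>R f \<omega>) = H (\<omega>, x (Suc t) \<omega>)"
        using AE3
      proof eventually_elim
        case (elim \<omega>)
        then have "V (Suc t) \<omega> = fK (V t \<omega>) (x (Suc t) \<omega>)" using pii_Suc_fK by simp
        then show ?case by (simp add: H_def f_def indicator_def)
      qed
    qed
    also have "\<dots> = (\<integral>\<^sup>+\<omega>. \<integral>\<^sup>+y. ennreal (rho t \<omega> y) * H (\<omega>, y) \<partial>N \<partial>M)"
      by (rule CL[OF S_all Hm])
    also have "\<dots> = (\<integral>\<^sup>+\<omega>. ennreal (indicator A \<omega> *\<^sub>R g \<omega>) \<partial>M)"
    proof (rule nn_integral_cong_AE)
      show "AE \<omega> in M. (\<integral>\<^sup>+y. ennreal (rho t \<omega> y) * H (\<omega>, y) \<partial>N) = ennreal (indicator A \<omega> *\<^sub>R g \<omega>)"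
        using AE3
      proof eventually_elim
        case (elim \<omega>)
        have "(\<integral>\<^sup>+y. ennreal (rho t \<omega> y) * H (\<omega>, y) \<partial>N) =
            (\<integral>\<^sup>+y. indicator A \<omega> * (ennreal (dK (V t \<omega>) y) * indicator B (fK (V t \<omega>) y)) \<partial>N)"
          using elim by (intro nn_integral_cong) (simp add: H_def rho_dK mult_ac)
        also have "\<dots> = indicator A \<omega> * emeasure (Ker (V t \<omega>)) B"
          by (subst nn_integral_cmult) (simp_all add: emeasure_Ker[OF B])
        also have "\<dots> = ennreal (indicator A \<omega> *\<^sub>R g \<omega>)"
        proof -
          interpret K: prob_space "Ker (V t \<omega>)" by (rule prob_Ker)
          show ?thesis unfolding g_def by (simp add: K.emeasure_eq_measure indicator_def)
        qed
        finally show ?case .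
      qed
    qed
    finally have eq: "(\<integral>\<^sup>+\<omega>. ennreal (indicator A \<omega> *\<^sub>R f \<omega>) \<partial>M) = (\<integral>\<^sup>+\<omega>. ennreal (indicator A \<omega> *\<^sub>R g \<omega>) \<partial>M)" .
    have "(\<integral>\<omega>\<in>A. f \<omega> \<partial>M) = enn2real (\<integral>\<^sup>+\<omega>. ennreal (indicator A \<omega> *\<^sub>R f \<omega>) \<partial>M)"
      unfolding set_lebesgue_integral_def by (rule integral_eq_nn_integral) (auto simp: f_def)
    also have "\<dots> = enn2real (\<integral>\<^sup>+\<omega>. ennreal (indicator A \<omega> *\<^sub>R g \<omega>) \<partial>M)" by (simp only: eq)
    also have "\<dots> = (\<integral>\<omega>\<in>A. g \<omega> \<partial>M)"
      unfolding set_lebesgue_integral_def by (rule integral_eq_nn_integral[symmetric]) (auto simp: g01)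
    finally show "(\<integral>\<omega>\<in>A. f \<omega> \<partial>M) = (\<integral>\<omega>\<in>A. g \<omega> \<partial>M)" .
  qed (simp_all add: intf intg gP)
  then show ?thesis unfolding f_def g_def .
qed

end


context chg
begin

definition Fw :: "real \<Rightarrow> 'b \<Rightarrow> real" where "Fw w y = w * q y / (w * q y + (1 - w) * p y)"
definition Dw :: "real \<Rightarrow> 'b \<Rightarrow> real" where "Dw w y = w * q y + (1 - w) * p y"

lemma fK_Fw: "fK z y = Fw (W z) y" unfolding fK_def Fw_def dK_def ..
lemma dK_Dw: "dK z y = Dw (W z) y" unfolding dK_def Dw_def ..

lemma Fw01: assumes "0 \<le> w" "w \<le> 1" shows "0 \<le> Fw w y" "Fw w y \<le> 1"
proof -
  have a: "0 \<le> w * q y" using assms q0[of y] by simp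
  have b: "0 \<le> (1 - w) * p y" using assms p0[of y] by simp
  show "0 \<le> Fw w y" unfolding Fw_def using a b by simp
  show "Fw w y \<le> 1" unfolding Fw_def using a b
    by (cases "w * q y + (1 - w) * p y = 0") (auto simp: divide_le_eq_1)
qed

lemma frac_le_aux: "(0::real) < b \<Longrightarrow> 0 < d \<Longrightarrow> a * d \<le> c * b \<Longrightarrow> a / b \<le> c / d"
  by (simp add: divide_simps mult.commute)

lemma Fw_mono:
  assumes w: "\<theta> \<le> w" "w \<le> w'" "w' \<le> 1"
  shows "Fw w y \<le> Fw w' y"
proof (cases "w * q y + (1 - w) * p y = 0")
  case True
  then show ?thesis using Fw01[of w' y] w th0 by (simp add: Fw_def)
next
  case False
  have a: "0 \<le> w * q y" using w th0 q0[of y] by simp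
  have b: "0 \<le> (1 - w) * p y" using w p0[of y] by simp
  have D: "0 < w * q y + (1 - w) * p y" using a b False by linarith
  have "q y \<noteq> 0"
  proof
    assume "q y = 0"
    then have "p y = 0" using pq[of y] p0[of y] q0[of y] by auto
    then show False using False \<open>q y = 0\<close> by simp
  qed
  then have qp: "q y > 0" using q0[of y] by simp
  have w'p: "0 < w'" using w th0 by simp
  have D': "0 < w' * q y + (1 - w') * p y"
    using qp w'p w p0[of y] by (simp add: add_pos_nonneg)
  have "w' * q y * (w * q y + (1 - w) * p y) - w * q y * (w' * q y + (1 - w') * p y) = (w' - w) * (q y * p y)"
    by (simp add: algebra_simps)
  moreover have "(w' - w) * (q y * p y) \<ge> 0" using w p0[of y] q0[of y] by simp
  ultimately have "w * q y * (w' * q y + (1 - w') * p y) \<le> w' * q y * (w * q y + (1 - w) * p y)" by linarith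
  then show ?thesis unfolding Fw_def by (rule frac_le_aux[OF D D'])
qed

lemma p_int: "integrable N p"
  by (rule integrableI_nonneg) (auto simp: p0 pint)
lemma q_int: "integrable N q"
  by (rule integrableI_nonneg) (auto simp: q0 qint)
lemma p_tot: "integral\<^sup>L N p = 1"
  using integral_eq_nn_integral[of p N] p0 pint by simp
lemma q_tot: "integral\<^sup>L N q = 1"
  using integral_eq_nn_integral[of q N] q0 qint by simp

definition Qs :: "'b set \<Rightarrow> real" where "Qs S = (\<integral>y. q y * indicator S y \<partial>N)"
definition Ps :: "'b set \<Rightarrow> real" where "Ps S = (\<integral>y. p y * indicator S y \<partial>N)"

lemma Qs01: "S \<in> sets N \<Longrightarrow> 0 \<le> Qs S \<and> Qs S \<le> 1"
proof -
  assume S: "S \<in> sets N"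
  have "Qs S \<le> integral\<^sup>L N q" unfolding Qs_def
    by (rule integral_mono[OF integrable_real_mult_indicator[OF S q_int] q_int]) (simp add: q0 indicator_def)
  then show ?thesis unfolding Qs_def using q_tot q0 by (simp add: indicator_def)
qed

lemma Ps01: "S \<in> sets N \<Longrightarrow> 0 \<le> Ps S \<and> Ps S \<le> 1"
proof -
  assume S: "S \<in> sets N"
  have "Ps S \<le> integral\<^sup>L N p" unfolding Ps_def
    by (rule integral_mono[OF integrable_real_mult_indicator[OF S p_int] p_int]) (simp add: p0 indicator_def)
  then show ?thesis unfolding Ps_def using p_tot p0 by (simp add: indicator_def)
qed

lemma Qs_compl: "S \<in> sets N \<Longrightarrow> Qs (space N - S) = 1 - Qs S"
proof -
  assume S: "S \<in> sets N"
  have "Qs (space N - S) = (\<integral>y. q y - q y * indicator S y \<partial>N)"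
    unfolding Qs_def by (rule Bochner_Integration.integral_cong) (auto simp: indicator_def)
  also have "\<dots> = 1 - Qs S"
    unfolding Qs_def using q_tot integrable_real_mult_indicator[OF S q_int] q_int by simp
  finally show ?thesis .
qed

lemma Ps_compl: "S \<in> sets N \<Longrightarrow> Ps (space N - S) = 1 - Ps S"
proof -
  assume S: "S \<in> sets N"
  have "Ps (space N - S) = (\<integral>y. p y - p y * indicator S y \<partial>N)"
    unfolding Ps_def by (rule Bochner_Integration.integral_cong) (auto simp: indicator_def)
  also have "\<dots> = 1 - Ps S"
    unfolding Ps_def using p_tot integrable_real_mult_indicator[OF S p_int] p_int by simp
  finally show ?thesis .
qed

lemma lin_ineq:
  assumes S: "S \<in> sets N" and le: "\<And>y. y \<in> S \<Longrightarrow> a * p y \<le> b * q y"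
  shows "a * Ps S \<le> b * Qs S"
proof -
  have i1: "integrable N (\<lambda>y. p y * indicator S y)" by (rule integrable_real_mult_indicator[OF S p_int])
  have i2: "integrable N (\<lambda>y. q y * indicator S y)" by (rule integrable_real_mult_indicator[OF S q_int])
  have "(\<integral>y. a * (p y * indicator S y) \<partial>N) \<le> (\<integral>y. b * (q y * indicator S y) \<partial>N)"
    by (rule integral_mono) (use i1 i2 le in \<open>auto simp: indicator_def\<close>)
  then show ?thesis unfolding Ps_def Qs_def using i1 i2 by simp
qed

lemma lin_ineq2:
  assumes S: "S \<in> sets N" and le: "\<And>y. y \<in> S \<Longrightarrow> b * q y \<le> a * p y"
  shows "b * Qs S \<le> a * Ps S"
proof -
  have i1: "integrable N (\<lambda>y. p y * indicator S y)" by (rule integrable_real_mult_indicator[OF S p_int])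
  have i2: "integrable N (\<lambda>y. q y * indicator S y)" by (rule integrable_real_mult_indicator[OF S q_int])
  have "(\<integral>y. b * (q y * indicator S y) \<partial>N) \<le> (\<integral>y. a * (p y * indicator S y) \<partial>N)"
    by (rule integral_mono) (use i1 i2 le in \<open>auto simp: indicator_def\<close>)
  then show ?thesis unfolding Ps_def Qs_def using i1 i2 by simp
qed

lemma NP:
  assumes w': "\<theta> \<le> w'" "w' \<le> 1"
  shows "Ps {y\<in>space N. c \<le> Fw w' y} \<le> Qs {y\<in>space N. c \<le> Fw w' y}"
proof -
  define S where "S = {y\<in>space N. c \<le> Fw w' y}"
  have Fm: "Fw w' \<in> borel_measurable N" unfolding Fw_def[abs_def] by measurable
  have S: "S \<in> sets N"
  proof -
    have "S = Fw w' -` {c..} \<inter> space N" by (auto simp: S_def)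
    also have "\<dots> \<in> sets N" by (rule measurable_sets[OF Fm]) simp
    finally show ?thesis .
  qed
  have w'0: "0 < w'" using w' th0 by simp
  have F01: "\<And>y. 0 \<le> Fw w' y \<and> Fw w' y \<le> 1" using Fw01[of w'] w' w'0 by simp
  have "Ps S \<le> Qs S"
  proof (cases "c \<le> 0")
    case True
    then have "S = space N" using F01 unfolding S_def by (auto intro: order_trans)
    have "Ps S = integral\<^sup>L N p" unfolding Ps_def \<open>S = space N\<close> by (rule Bochner_Integration.integral_cong) auto
    moreover have "Qs S = integral\<^sup>L N q" unfolding Qs_def \<open>S = space N\<close> by (rule Bochner_Integration.integral_cong) auto
    ultimately show ?thesis using p_tot q_tot by simp
  next
    case cpos: False
    show ?thesis
    proof (cases "c > 1")
      case True
      then have "S = {}" using F01 unfolding S_def by (auto simp: not_le intro: le_less_trans)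
      then show ?thesis by (simp add: Ps_def Qs_def)
    next
      case False
      then have c01: "0 < c" "c \<le> 1" using cpos by auto
      show ?thesis
      proof (cases "w' = 1")
        case True
        have Seq: "S = {y\<in>space N. q y > 0}"
        proof -
          have "c \<le> Fw w' y \<longleftrightarrow> q y > 0" for y
            using True c01 q0[of y] by (auto simp: Fw_def)
          then show ?thesis unfolding S_def by auto
        qed
        have "Qs S = integral\<^sup>L N q" unfolding Qs_def Seq
          by (rule Bochner_Integration.integral_cong) (auto simp: indicator_def less_le q0)
        then show ?thesis using Ps01[OF S] q_tot by simp
      next
        case False
        then have w'1: "w' < 1" using w' by simp
        define al where "al = c * (1 - w')"
        define be where "be = (1 - c) * w'"
        have al: "al > 0" unfolding al_def using c01 w'1 by simp
        have be: "be \<ge> 0" unfolding be_def using c01 w'0 by simp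
        have A: "al * p y \<le> be * q y" if "y \<in> S" for y
        proof -
          define Xq where "Xq = w' * q y"
          define Yp where "Yp = (1 - w') * p y"
          have X0: "Xq \<ge> 0" "Yp \<ge> 0" unfolding Xq_def Yp_def using w'0 w'1 p0[of y] q0[of y] by auto
          have cF: "c \<le> Xq / (Xq + Yp)" using that unfolding S_def Fw_def Xq_def Yp_def by simp
          have D: "Xq + Yp > 0"
          proof (rule ccontr)
            assume "\<not> Xq + Yp > 0"
            then have "Xq + Yp = 0" using X0 by simp
            then show False using cF c01 by simp
          qed
          have "c * (Xq + Yp) \<le> Xq" using cF D by (simp add: le_divide_eq)
          then have "c * Yp \<le> (1 - c) * Xq" by (simp add: algebra_simps)
          then show ?thesis unfolding al_def be_def Xq_def Yp_def by (simp add: mult_ac)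
        qed
        have B: "be * q y \<le> al * p y" if "y \<in> space N - S" for y
        proof -
          define Xq where "Xq = w' * q y"
          define Yp where "Yp = (1 - w') * p y"
          have X0: "Xq \<ge> 0" "Yp \<ge> 0" unfolding Xq_def Yp_def using w'0 w'1 p0[of y] q0[of y] by auto
          have cF: "Xq / (Xq + Yp) < c" using that unfolding S_def Fw_def Xq_def Yp_def by auto
          show ?thesis
          proof (cases "Xq + Yp = 0")
            case True
            then have "Xq = 0" "Yp = 0" using X0 by auto
            then have "q y = 0" "p y = 0" using w'0 w'1 unfolding Xq_def Yp_def by auto
            then show ?thesis by simp
          next
            case False
            then have D: "Xq + Yp > 0" using X0 by simp
            have "Xq < c * (Xq + Yp)" using cF D by (simp add: divide_less_eq)
            then have "(1 - c) * Xq \<le> c * Yp" by (simp add: algebra_simps)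
            then show ?thesis unfolding al_def be_def Xq_def Yp_def by (simp add: mult_ac)
          qed
        qed
        have S': "space N - S \<in> sets N" using S by auto
        have i1: "al * Ps S \<le> be * Qs S" by (rule lin_ineq[OF S A])
        have i2: "be * Qs (space N - S) \<le> al * Ps (space N - S)"
          by (rule lin_ineq2[OF S' B])
        then have i2': "be * (1 - Qs S) \<le> al * (1 - Ps S)" unfolding Ps_compl[OF S] Qs_compl[OF S] .
        have u: "0 \<le> Qs S" "Qs S \<le> 1" using Qs01[OF S] by auto
        show ?thesis
        proof (cases "be \<ge> al")
          case True
          have "al * (1 - Qs S) \<le> be * (1 - Qs S)" using True u by (intro mult_right_mono) auto
          then have "al * (1 - Qs S) \<le> al * (1 - Ps S)" using i2' by linarith
          then have "1 - Qs S \<le> 1 - Ps S" using al by simp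
          then show ?thesis by simp
        next
          case False
          have "be * Qs S \<le> al * Qs S" using False u by (intro mult_right_mono) auto
          then have "al * Ps S \<le> al * Qs S" using i1 by linarith
          then show ?thesis using al by simp
        qed
      qed
    qed
  qed
  then show ?thesis by (simp add: S_def)
qed


definition Sz :: "real \<Rightarrow> real \<Rightarrow> 'b set" where "Sz w c = {y\<in>space N. c \<le> Fw w y}"

lemma Sz_sets: "Sz w c \<in> sets N"
proof -
  have Fm: "Fw w \<in> borel_measurable N" unfolding Fw_def[abs_def] by measurable
  have "Sz w c = Fw w -` {c..} \<inter> space N" by (auto simp: Sz_def)
  also have "\<dots> \<in> sets N" by (rule measurable_sets[OF Fm]) simp
  finally show ?thesis .
qed

lemma Ker_int: "measure (Ker z) {c..} = W z * Qs (Sz (W z) c) + (1 - W z) * Ps (Sz (W z) c)"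
proof -
  define S where "S = Sz (W z) c"
  have S: "S \<in> sets N" unfolding S_def by (rule Sz_sets)
  have i1: "integrable N (\<lambda>y. p y * indicator S y)" by (rule integrable_real_mult_indicator[OF S p_int])
  have i2: "integrable N (\<lambda>y. q y * indicator S y)" by (rule integrable_real_mult_indicator[OF S q_int])
  define f where "f y = W z * (q y * indicator S y) + (1 - W z) * (p y * indicator S y)" for y
  have fm: "f \<in> borel_measurable N" unfolding f_def using S by measurable
  have f0: "0 \<le> f y" for y unfolding f_def using W01[of z] p0[of y] q0[of y] by (simp add: indicator_def)
  have "emeasure (Ker z) {c..} = (\<integral>\<^sup>+y. ennreal (dK z y) * indicator {c..} (fK z y) \<partial>N)"
    by (rule emeasure_Ker) simp
  also have "\<dots> = (\<integral>\<^sup>+y. ennreal (f y) \<partial>N)"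
  proof (intro nn_integral_cong)
    fix y assume "y \<in> space N"
    then show "ennreal (dK z y) * indicator {c..} (fK z y) = ennreal (f y)"
      by (simp add: f_def S_def Sz_def dK_Dw fK_Fw Dw_def indicator_def algebra_simps)
  qed
  finally have e: "emeasure (Ker z) {c..} = (\<integral>\<^sup>+y. ennreal (f y) \<partial>N)" .
  have "measure (Ker z) {c..} = enn2real (\<integral>\<^sup>+y. ennreal (f y) \<partial>N)" unfolding measure_def e ..
  also have "\<dots> = integral\<^sup>L N f" by (rule integral_eq_nn_integral[symmetric, OF fm]) (simp add: f0)
  also have "\<dots> = W z * Qs S + (1 - W z) * Ps S"
    unfolding f_def Qs_def Ps_def using i1 i2 by simp
  finally show ?thesis unfolding S_def .
qed

lemma Qs_mono: "S \<in> sets N \<Longrightarrow> S' \<in> sets N \<Longrightarrow> S \<subseteq> S' \<Longrightarrow> Qs S \<le> Qs S'"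
  unfolding Qs_def
  by (rule integral_mono[OF integrable_real_mult_indicator[OF _ q_int] integrable_real_mult_indicator[OF _ q_int]])
    (auto simp: indicator_def q0)

lemma Ps_mono: "S \<in> sets N \<Longrightarrow> S' \<in> sets N \<Longrightarrow> S \<subseteq> S' \<Longrightarrow> Ps S \<le> Ps S'"
  unfolding Ps_def
  by (rule integral_mono[OF integrable_real_mult_indicator[OF _ p_int] integrable_real_mult_indicator[OF _ p_int]])
    (auto simp: indicator_def p0)

lemma stoch_mono:
  assumes "z \<le> z'"
  shows "measure (Ker z) {c..} \<le> measure (Ker z') {c..}"
proof -
  define w where "w = W z"
  define w' where "w' = W z'"
  have ww: "\<theta> \<le> w" "w \<le> w'" "w' \<le> 1" using W01 W_mono[OF assms] unfolding w_def w'_def by auto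
  define S where "S = Sz w c"
  define S' where "S' = Sz w' c"
  have S: "S \<in> sets N" "S' \<in> sets N" unfolding S_def S'_def by (rule Sz_sets)+
  have SS: "S \<subseteq> S'" unfolding S_def S'_def Sz_def using Fw_mono[OF ww] by (auto intro: order_trans)
  have "measure (Ker z) {c..} = w * Qs S + (1 - w) * Ps S" unfolding w_def S_def by (rule Ker_int)
  also have "\<dots> \<le> w * Qs S' + (1 - w) * Ps S'"
    using Qs_mono[OF S SS] Ps_mono[OF S SS] ww th0
    by (intro add_mono mult_left_mono) auto
  also have "\<dots> \<le> w' * Qs S' + (1 - w') * Ps S'"
  proof -
    have "Ps S' \<le> Qs S'" unfolding S'_def Sz_def using NP[of w' c] ww th0 by simp
    then have "(w' - w) * (Qs S' - Ps S') \<ge> 0" using ww by simp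
    then show ?thesis by (simp add: algebra_simps)
  qed
  also have "\<dots> = measure (Ker z') {c..}" unfolding w'_def S'_def by (rule Ker_int[symmetric])
  finally show ?thesis .
qed

end


theorem mainTheorem19:
  fixes M :: "'a measure" and N :: "'b measure"
    and K :: nat and \<theta> :: real and p q :: "'b \<Rightarrow> real"
    and tau :: "nat \<Rightarrow> 'a \<Rightarrow> nat" and X :: "nat \<Rightarrow> nat \<Rightarrow> 'a \<Rightarrow> 'b"
  assumes "prob_space M"
    and "K \<ge> 1"
    and "0 < \<theta>" and "\<theta> < 1"
    and "p \<in> borel_measurable N" and "q \<in> borel_measurable N"
    and "\<And>y. p y \<ge> 0" and "\<And>y. q y \<ge> 0"
    and "(\<integral>\<^sup>+ y. ennreal (p y) \<partial>N) = 1" and "(\<integral>\<^sup>+ y. ennreal (q y) \<partial>N) = 1"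
    and "\<And>y. p y > 0 \<longleftrightarrow> q y > 0"
    and "\<And>k. tau k \<in> measurable M (count_space UNIV)"
    and "\<And>k t. X k t \<in> measurable M N"
    and "\<And>n (m :: nat \<Rightarrow> nat) (A :: nat \<Rightarrow> nat \<Rightarrow> 'b set).
           (\<And>k t. A k t \<in> sets N) \<Longrightarrow>
           emeasure M {\<omega> \<in> space M. (\<forall>k\<in>{1..K}. tau k \<omega> = m k) \<and>
                                     (\<forall>k\<in>{1..K}. \<forall>t\<in>{1..n}. X k t \<omega> \<in> A k t)}
           = (\<Prod>k\<in>{1..K}. ennreal (\<theta> * (1 - \<theta>) ^ m k)) *
             (\<Prod>k\<in>{1..K}. \<Prod>t\<in>{1..n}.
                 \<integral>\<^sup>+ y \<in> A k t. ennreal (if t \<le> m k then p y else q y) \<partial>N)"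
  defines "V \<equiv> (\<lambda>t. posterior M N (tau 1) (X 1) t)"
  shows "(\<forall>t. AE \<omega> in M. V t \<omega> \<in> {0..1}) \<and>
         (\<exists>Ker :: real \<Rightarrow> real measure.
            Ker \<in> measurable borel (prob_algebra borel) \<and>
            (\<forall>x\<in>{0..1}. emeasure (Ker x) {0..1} = 1) \<and>
            (\<forall>t (B :: real set). B \<in> sets borel \<longrightarrow>
               (AE \<omega> in M. real_cond_exp M (proc_sigma M V t)
                              (\<lambda>\<omega>'. indicator B (V (Suc t) \<omega>')) \<omega>
                            = measure (Ker (V t \<omega>)) B)) \<and>
            (\<forall>x x'. 0 \<le> x \<and> x \<le> x' \<and> x' \<le> 1 \<longrightarrow> stoch_le (Ker x) (Ker x')))"
proof -
  interpret c: chg M N K \<theta> p q tau X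
    by (rule chg.intro) (fact assms)+
  have Veq: "V = c.V" unfolding V_def by (rule ext) (simp add: c.V_def)
  show ?thesis unfolding Veq
  proof (intro conjI allI impI exI[of _ c.Ker] ballI)
    show "AE \<omega> in M. c.V t \<omega> \<in> {0..1}" for t by (rule c.V_01)
    show "c.Ker \<in> borel \<rightarrow>\<^sub>M prob_algebra borel" by (rule c.Ker_meas)
    show "emeasure (c.Ker x) {0..1} = 1" for x by (rule c.Ker01)
    show "AE \<omega> in M. real_cond_exp M (proc_sigma M c.V t) (\<lambda>\<omega>'. indicator B (c.V (Suc t) \<omega>')) \<omega> = measure (c.Ker (c.V t \<omega>)) B"
      if "B \<in> sets borel" for t B
      using c.markov[OF that, of t] unfolding c.P_def .
    show "stoch_le (c.Ker x) (c.Ker x')" if "0 \<le> x \<and> x \<le> x' \<and> x' \<le> 1" for x x'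
      unfolding stoch_le_def using c.stoch_mono that by blast
  qed
qed


end
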